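(* Let $F\in\mathcal S^\sharp_d$ with $d>2$. Let $f_0$ be a twist function with $0\le\mathrm{lexp}(f_0)\le 1/d$, and let $S_1,\dots,S_k$ be shifts. Then for $j=1,\dots,k$ the functions $S_jT^\flat S_{j-1}\cdots T^\flat S_1(f_0)$ are well defined and $\ell_j:=\mathrm{lexp}(S_jT^\flat S_{j-1}\cdots T^\flat S_1(f_0))=\deg S_j$. In particular $\ell_j>1/d$ for all $j=1,\dots,k$.
   Context: The extended Selberg class $\mathcal{S}^\sharp$ consists of the not identically zero functions $F(s)=\sum_{n\ge1}a(n)n^{-s}$, absolutely convergent for $\Re s>1$, such that $(s-1)^mF(s)$ is entire of finite order for some integer $m\ge0$, and satisfying a functional equation $\Phi(s)=\omega\overline{\Phi}(1-s)$ with $\Phi(s)=Q^s\prod_{j=1}^r\Gamma(\lambda_js+\mu_j)F(s)$, $\overline{\Phi}(s)=\overline{\Phi(\bar s)}$, $Q>0$, $\lambda_j>0$, $\Re\mu_j\ge0$, $|\omega|=1$. Degree $d=2\sum\lambda_j$, conductor $q_F=(2\pi)^dQ^2\prod\lambda_j^{2\lambda_j}$; $\mathcal S^\sharp_d$ = functions of degree $d$. A twist function is $f(\xi)=\sum_{j=0}^N\alpha_j\xi^{\kappa_j}$, $0\le\kappa_N<\dots<\kappa_0$, real $\alpha_j\ne0$; $\mathrm{lexp}(f)=\kappa_0$. A shift is an operator $S(f)=f+P$ with $P\in\mathbb Z[\xi]$, $\deg P\ge1$; $\deg S:=\deg P$. The operator $T^\flat$ (relative to $F$) is defined on twist functions $f$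 with $\kappa_0=\mathrm{lexp}(f)>1/d$: if $\alpha_0>0$, let $\Phi(z,\xi)=z^{1/d}-2\pi f(qz/\xi)$, $q=q_F(2\pi d)^{-d}$; for large $\xi$ let $x_0(\xi)$ be the unique real positive critical point of $z\mapsto\Phi(z,\xi)$ (in a suitable region); $\frac1{2\pi}\Phi(x_0(\xi),\xi)$ has an expansion $\xi^{\kappa_0^*}\sum_{\omega\in\mathcal D_f}A_\omega\xi^{-\omega^*}$, where $\kappa_0^*=\kappa_0/(d\kappa_0-1)$, $\omega^*=\omega/(d\kappa_0-1)$, $\mathcal D_f$ = nonnegative integer combinations of $\kappa_0-\kappa_j$, $j=1,\dots,N$, and the leading coefficient $A_0\neq0$; $T^\flat(f)$ is the finite part of this sum with $\omega\le\kappa_0$. If $\alpha_0<0$, $T^\flat(f)=-T^\flat(-f)$. Thus $\mathrm{lexp}(T^\flat(f))=\kappa_0/(d\kappa_0-1)$. *)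

theory Defs
  imports "HOL-Analysis.Analysis" "HOL-Library.Landau_Symbols"
          "HOL-Computational_Algebra.Polynomial"
begin

text \<open>F is given as a function on the complex plane (its value at s = 1 is irrelevant),
  a its Dirichlet coefficients (a n for n \<ge> 1), and Q, r, lam, mu, w the data of
  the functional equation with Gamma factors Gamma(lam j * s + mu j), j < r.\<close>

definition ext_selberg ::
  "(nat \<Rightarrow> complex) \<Rightarrow> (complex \<Rightarrow> complex) \<Rightarrow> real \<Rightarrow> nat \<Rightarrow> (nat \<Rightarrow> real)
    \<Rightarrow> (nat \<Rightarrow> complex) \<Rightarrow> complex \<Rightarrow> bool" where
  "ext_selberg a F Q r lam mu w \<longleftrightarrow>
     (\<exists>s. s \<noteq> 1 \<and> F s \<noteq> 0) \<and>
     (\<forall>s. Re s > 1 \<longrightarrow>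
        summable (\<lambda>n. norm (a (Suc n) / of_nat (Suc n) powr s)) \<and>
        F s = (\<Sum>n. a (Suc n) / of_nat (Suc n) powr s)) \<and>
     (\<exists>m::nat. \<exists>G. G holomorphic_on UNIV \<and>
        (\<exists>A \<rho>. \<forall>s. norm (G s) \<le> A * exp (norm s powr \<rho>)) \<and>
        (\<forall>s. s \<noteq> 1 \<longrightarrow> G s = (s - 1) ^ m * F s)) \<and>
     Q > 0 \<and> (\<forall>j<r. lam j > 0 \<and> Re (mu j) \<ge> 0) \<and> norm w = 1 \<and>
     (\<forall>s. s \<noteq> 0 \<and> s \<noteq> 1 \<and>
        (\<forall>j<r. complex_of_real (lam j) * s + mu j \<notin> \<int>\<^sub>\<le>\<^sub>0 \<and>
               complex_of_real (lam j) * (1 - s) + cnj (mu j) \<notin> \<int>\<^sub>\<le>\<^sub>0) \<longrightarrow>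
        complex_of_real Q powr s * (\<Prod>j<r. Gamma (complex_of_real (lam j) * s + mu j)) * F s
        = w * (complex_of_real Q powr (1 - s) *
               (\<Prod>j<r. Gamma (complex_of_real (lam j) * (1 - s) + cnj (mu j))) *
               cnj (F (cnj (1 - s)))))"

definition sel_degree :: "nat \<Rightarrow> (nat \<Rightarrow> real) \<Rightarrow> real" where
  "sel_degree r lam = 2 * (\<Sum>j<r. lam j)"

definition sel_conductor :: "real \<Rightarrow> nat \<Rightarrow> (nat \<Rightarrow> real) \<Rightarrow> real" where
  "sel_conductor Q r lam =
     (2 * pi) powr (sel_degree r lam) * Q ^ 2 * (\<Prod>j<r. lam j powr (2 * lam j))"

definition sel_q :: "real \<Rightarrow> nat \<Rightarrow> (nat \<Rightarrow> real) \<Rightarrow> real" where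
  "sel_q Q r lam = sel_conductor Q r lam * (2 * pi * sel_degree r lam) powr (- sel_degree r lam)"

text \<open>A twist function sum_j alpha_j xi^kappa_j is represented by its coefficient map
  c : exponent \<mapsto> coefficient, with finite nonempty support contained in [0, \<infinity>).\<close>

definition tw_supp :: "(real \<Rightarrow> real) \<Rightarrow> real set" where
  "tw_supp c = {\<kappa>. c \<kappa> \<noteq> 0}"

definition is_twist :: "(real \<Rightarrow> real) \<Rightarrow> bool" where
  "is_twist c \<longleftrightarrow> finite (tw_supp c) \<and> tw_supp c \<noteq> {} \<and> (\<forall>\<kappa>\<in>tw_supp c. 0 \<le> \<kappa>)"

definition lexp :: "(real \<Rightarrow> real) \<Rightarrow> real" where
  "lexp c = Max (tw_supp c)"

definition tw_eval :: "(real \<Rightarrow> real) \<Rightarrow> real \<Rightarrow> real" where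
  "tw_eval c \<xi> = (\<Sum>\<kappa>\<in>tw_supp c. c \<kappa> * \<xi> powr \<kappa>)"

text \<open>The shift S(f) = f + P, P an integer polynomial (of degree \<ge> 1).\<close>
definition shift :: "int poly \<Rightarrow> (real \<Rightarrow> real) \<Rightarrow> (real \<Rightarrow> real)" where
  "shift P c = (\<lambda>\<kappa>. c \<kappa> + (if \<kappa> \<in> \<nat> then real_of_int (coeff P (nat \<lfloor>\<kappa>\<rfloor>)) else 0))"

definition Dset :: "(real \<Rightarrow> real) \<Rightarrow> real set" where
  "Dset c = {\<omega>. \<exists>n :: real \<Rightarrow> nat.
     \<omega> = (\<Sum>\<kappa>\<in>tw_supp c - {lexp c}. real (n \<kappa>) * (lexp c - \<kappa>))}"

text \<open>crit_expansion d q f A: for large xi, x0(xi) is the unique positive critical point of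
  z \<mapsto> Phi(z,xi) = z^(1/d) - 2 pi f(q z / xi) in a region q z / xi \<ge> R, and
  (1/2pi) Phi(x0(xi),xi) has the asymptotic expansion
  xi^(kappa0*) sum_{omega in D_f} A_omega xi^(-omega*), with A_0 \<noteq> 0
  (asymptotic in the sense that truncating at omega \<le> W leaves an error
  o(xi^((kappa0 - W)/(d kappa0 - 1))) for every W).\<close>
definition crit_expansion :: "real \<Rightarrow> real \<Rightarrow> (real \<Rightarrow> real) \<Rightarrow> (real \<Rightarrow> real) \<Rightarrow> bool" where
  "crit_expansion d q f A \<longleftrightarrow>
     (let \<kappa>0 = lexp f; e = d * \<kappa>0 - 1;
          Phi = (\<lambda>z \<xi>. z powr (1 / d) - 2 * pi * tw_eval f (q * z / \<xi>))
      in (\<forall>\<omega>. \<omega> \<notin> Dset f \<longrightarrow> A \<omega> = 0) \<and> A 0 \<noteq> 0 \<and>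
         (\<exists>R x0.
            (\<forall>\<^sub>F \<xi> in at_top. 0 < x0 \<xi> \<and> R \<le> q * x0 \<xi> / \<xi> \<and>
               ((\<lambda>z. Phi z \<xi>) has_real_derivative 0) (at (x0 \<xi>)) \<and>
               (\<forall>z>0. R \<le> q * z / \<xi> \<and> ((\<lambda>z. Phi z \<xi>) has_real_derivative 0) (at z)
                      \<longrightarrow> z = x0 \<xi>)) \<and>
            (\<forall>W. (\<lambda>\<xi>. Phi (x0 \<xi>) \<xi> / (2 * pi)
                     - \<xi> powr (\<kappa>0 / e) * (\<Sum>\<omega>\<in>{\<omega>\<in>Dset f. \<omega> \<le> W}. A \<omega> * \<xi> powr (- \<omega> / e)))
                  \<in> o[at_top](\<lambda>\<xi>. \<xi> powr ((\<kappa>0 - W) / e)))))"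

text \<open>Case alpha_0 > 0: finite part (omega \<le> kappa0) of the expansion; the term with index
  omega has exponent (kappa0 - omega)/(d kappa0 - 1).\<close>
definition Tflat_pos :: "real \<Rightarrow> real \<Rightarrow> (real \<Rightarrow> real) \<Rightarrow> (real \<Rightarrow> real)" where
  "Tflat_pos d q f =
     (let A = (THE A. crit_expansion d q f A); e = d * lexp f - 1
      in (\<lambda>\<epsilon>. if 0 \<le> \<epsilon> then A (lexp f - \<epsilon> * e) else 0))"

definition Tflat :: "real \<Rightarrow> real \<Rightarrow> (real \<Rightarrow> real) \<Rightarrow> (real \<Rightarrow> real)" where
  "Tflat d q f =
     (if 0 < f (lexp f) then Tflat_pos d q f
      else (\<lambda>\<epsilon>. - Tflat_pos d q (\<lambda>\<kappa>. - f \<kappa>) \<epsilon>))"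

definition Tflat_defined :: "real \<Rightarrow> real \<Rightarrow> (real \<Rightarrow> real) \<Rightarrow> bool" where
  "Tflat_defined d q f \<longleftrightarrow> is_twist f \<and> lexp f > 1 / d \<and>
     (\<exists>!A. crit_expansion d q (if 0 < f (lexp f) then f else (\<lambda>\<kappa>. - f \<kappa>)) A)"

text \<open>twchain d q f0 P j = S_j T S_{j-1} ... T S_1 (f0), with S_j(f) = f + P j.\<close>
primrec twchain :: "real \<Rightarrow> real \<Rightarrow> (real \<Rightarrow> real) \<Rightarrow> (nat \<Rightarrow> int poly) \<Rightarrow> nat \<Rightarrow> (real \<Rightarrow> real)" where
  "twchain d q f0 P 0 = f0"
| "twchain d q f0 P (Suc j) =
     (if j = 0 then shift (P 1) f0 else shift (P (Suc j)) (Tflat d q (twchain d q f0 P j)))"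

end

theory Submission
  imports Defs
begin


locale tsys =
  fixes T :: "real \<Rightarrow> real"
  assumes Tpos: "eventually (\<lambda>x. T x > 0) at_top"
  and Tlim: "(T \<longlongrightarrow> 0) at_top"
begin

lemma Tsmall: "eventually (\<lambda>x. 0 < T x \<and> T x < 1) at_top"
proof -
  have "eventually (\<lambda>x. T x < 1) at_top" using order_tendstoD(2)[OF Tlim, of 1] by simp
  with Tpos show ?thesis by eventually_elim auto
qed

lemma powr_bigo: "a \<le> b \<Longrightarrow> (\<lambda>x. T x powr b) \<in> O(\<lambda>x. T x powr a)"
  apply (rule bigoI[where c=1]) using Tsmall by eventually_elim (simp add: powr_mono')

lemma powr_tendsto0: "0 < a \<Longrightarrow> ((\<lambda>x. T x powr a) \<longlongrightarrow> 0) at_top"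
  by (rule tendsto_zero_powrI[OF Tlim]) (use Tpos in \<open>auto elim: eventually_mono\<close>)

lemma powr_smallo: "a < b \<Longrightarrow> (\<lambda>x. T x powr b) \<in> o(\<lambda>x. T x powr a)"
proof (rule smalloI_tendsto)
  assume ab: "a < b"
  have "((\<lambda>x. T x powr (b - a)) \<longlongrightarrow> 0) at_top" using ab by (intro powr_tendsto0) auto
  moreover have "eventually (\<lambda>x. T x powr (b - a) = T x powr b / T x powr a) at_top"
    using Tpos by eventually_elim (simp add: powr_diff)
  ultimately show "((\<lambda>x. T x powr b / T x powr a) \<longlongrightarrow> 0) at_top"
    using tendsto_cong by fastforce
  show "eventually (\<lambda>x. T x powr a \<noteq> 0) at_top" using Tpos by eventually_elim simp
qed

lemma powr0_eq: "eventually (\<lambda>x. T x powr 0 = 1) at_top"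
  using Tpos by eventually_elim simp

lemma powr0_bigo: "(\<lambda>x. T x powr 0) \<in> O(\<lambda>_. 1)" "(\<lambda>_. 1) \<in> O(\<lambda>x. T x powr 0)"
  using landau_o.big.in_cong[OF powr0_eq] landau_o.big.cong[OF powr0_eq] by auto

lemma powr_bigo1: "0 \<le> a \<Longrightarrow> (\<lambda>x. T x powr a) \<in> O(\<lambda>_. 1)"
  using landau_o.big_trans[OF powr_bigo[of 0 a] powr0_bigo(1)] by simp

lemma bigo_tendsto0:
  assumes "f \<in> O(g)" "(g \<longlongrightarrow> 0) at_top" shows "(f \<longlongrightarrow> (0::real)) at_top"
proof -
  obtain c where c: "c > 0" "eventually (\<lambda>x. norm (f x) \<le> c * norm (g x)) at_top"
    using landau_o.bigE[OF assms(1)] by blast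
  have "((\<lambda>x. c * norm (g x)) \<longlongrightarrow> c * 0) at_top"
    by (intro tendsto_mult tendsto_const tendsto_norm_zero assms(2))
  then have "((\<lambda>x. c * norm (g x)) \<longlongrightarrow> 0) at_top" by simp
  then show ?thesis by (rule Lim_null_comparison[OF c(2)])
qed

lemma smallo_tendsto0:
  assumes "f \<in> o(g)" "g \<in> O(\<lambda>_. 1)" shows "(f \<longlongrightarrow> (0::real)) at_top"
proof -
  have "f \<in> o(\<lambda>_. 1)" using landau_o.small_big_trans[OF assms] .
  from smalloD_tendsto[OF this] show ?thesis by simp
qed

lemma uniq:
  assumes S: "finite S" and o: "(\<lambda>x. \<Sum>\<omega>\<in>S. c \<omega> * T x powr \<omega>) \<in> o(\<lambda>x. T x powr W)"
    and le: "\<forall>\<omega>\<in>S. \<omega> \<le> W"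
  shows "\<forall>\<omega>\<in>S. c \<omega> = 0"
proof (rule ccontr)
  assume H: "\<not> (\<forall>\<omega>\<in>S. c \<omega> = 0)"
  define S' where "S' = {\<omega>\<in>S. c \<omega> \<noteq> 0}"
  have S'ne: "S' \<noteq> {}" and S'fin: "finite S'" using H S by (auto simp: S'_def)
  define m where "m = Min S'"
  have mS': "m \<in> S'" using S'ne S'fin by (simp add: m_def)
  have mmin: "\<And>\<omega>. \<omega> \<in> S' \<Longrightarrow> m \<le> \<omega>" using S'fin by (simp add: m_def)
  have sumeq: "(\<Sum>\<omega>\<in>S. c \<omega> * T x powr \<omega>) = (\<Sum>\<omega>\<in>S'. c \<omega> * T x powr \<omega>)" for x
    by (rule sum.mono_neutral_right) (auto simp: S'_def S)
  define g where "g x = (\<Sum>\<omega>\<in>S'. c \<omega> * T x powr \<omega>) * T x powr (-m)" for x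
  have "g \<in> o(\<lambda>x. T x powr W * T x powr (-m))"
    unfolding g_def using landau_o.small.mult_right[OF o, of "\<lambda>x. T x powr (-m)"] sumeq by simp
  also have "(\<lambda>x. T x powr W * T x powr (-m)) = (\<lambda>x. T x powr (W - m))"
    by (simp add: powr_add[symmetric])
  finally have go: "g \<in> o(\<lambda>x. T x powr (W - m))" .
  have "W - m \<ge> 0" using le mS' by (auto simp: S'_def)
  then have g0: "(g \<longlongrightarrow> 0) at_top" by (intro smallo_tendsto0[OF go] powr_bigo1)
  have geq: "eventually (\<lambda>x. g x = c m + (\<Sum>\<omega>\<in>S'-{m}. c \<omega> * T x powr (\<omega> - m))) at_top"
    using Tpos
  proof eventually_elim
    case (elim x)
    have "g x = (\<Sum>\<omega>\<in>S'. c \<omega> * T x powr (\<omega> - m))"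
      by (simp add: g_def sum_distrib_right mult.assoc powr_add[symmetric])
    also have "\<dots> = c m * T x powr (m - m) + (\<Sum>\<omega>\<in>S'-{m}. c \<omega> * T x powr (\<omega> - m))"
      using mS' S'fin by (simp add: sum.remove)
    finally show ?case using elim by simp
  qed
  have "((\<lambda>x. c m + (\<Sum>\<omega>\<in>S'-{m}. c \<omega> * T x powr (\<omega> - m))) \<longlongrightarrow> c m + (\<Sum>\<omega>\<in>S'-{m}. c \<omega> * 0)) at_top"
  proof (intro tendsto_add tendsto_const tendsto_sum tendsto_mult)
    fix \<omega> assume "\<omega> \<in> S' - {m}"
    then have "\<omega> - m > 0" using mmin[of \<omega>] by auto
    then show "((\<lambda>x. T x powr (\<omega> - m)) \<longlongrightarrow> 0) at_top" by (rule powr_tendsto0)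
  qed
  then have "(g \<longlongrightarrow> c m) at_top" using tendsto_cong[OF geq] by simp
  with g0 have "c m = 0" using tendsto_unique[OF trivial_limit_at_top_linorder] by blast
  with mS' show False by (simp add: S'_def)
qed

end



lemma taylor_powr:
  fixes a :: real and N :: nat
  assumes N: "N > 0"
  shows "\<exists>C. \<forall>y. \<bar>y\<bar> \<le> 1/2 \<longrightarrow>
     \<bar>(1 + y) powr a - (\<Sum>m<N. ((\<Prod>i<m. (a - real i)) / fact m) * y ^ m)\<bar> \<le> C * \<bar>y\<bar> ^ N"
proof -
  define diff where "diff m x = (\<Prod>i<m. (a - real i)) * x powr (a - real m)" for m x
  define P where "P = \<bar>\<Prod>i<N. (a - real i)\<bar>"
  define C where "C = P * ((1/2) powr (a - real N) + (3/2) powr (a - real N)) / fact N"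
  have D: "DERIV (diff m) t :> diff (Suc m) t" if "1/2 \<le> t" for m t
  proof -
    have tpos: "t > 0" using that by simp
    have "DERIV (\<lambda>x. x powr (a - real m)) t :> (a - real m) * t powr (a - real m - 1)"
      using tpos by (auto intro!: derivative_eq_intros)
    then have "DERIV (diff m) t :> (\<Prod>i<m. (a - real i)) * ((a - real m) * t powr (a - real m - 1))"
      unfolding diff_def by (rule DERIV_cmult)
    moreover have "(\<Prod>i<m. (a - real i)) * ((a - real m) * t powr (a - real m - 1)) = diff (Suc m) t"
      by (simp add: diff_def algebra_simps)
    ultimately show ?thesis by simp
  qed
  have bnd: "t powr s \<le> (1/2) powr s + (3/2) powr s" if "1/2 \<le> t" "t \<le> 3/2" for t s :: real
  proof (cases "s \<ge> 0")
    case True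
    then have "t powr s \<le> (3/2) powr s" using that by (intro powr_mono2) auto
    then show ?thesis by (smt (verit) powr_ge_zero)
  next
    case False
    then have "t powr s \<le> (1/2) powr s" using that by (intro powr_mono2') auto
    then show ?thesis by (smt (verit) powr_ge_zero)
  qed
  have "\<bar>(1 + y) powr a - (\<Sum>m<N. ((\<Prod>i<m. (a - real i)) / fact m) * y ^ m)\<bar> \<le> C * \<bar>y\<bar> ^ N"
    if y: "\<bar>y\<bar> \<le> 1/2" for y
  proof (cases "y = 0")
    case True
    then show ?thesis using N by (simp add: zero_power)
  next
    case False
    have "\<exists>t. (if 1 + y < 1 then 1 + y < t \<and> t < 1 else 1 < t \<and> t < 1 + y) \<and>
      (\<lambda>x. x powr a) (1 + y) = (\<Sum>m<N. (diff m 1 / fact m) * ((1 + y) - 1)^m) + (diff N t / fact N) * ((1 + y) - 1)^N"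
    proof (rule Taylor[where a="1/2" and b="3/2"])
      show "diff 0 = (\<lambda>x. x powr a)" by (simp add: diff_def fun_eq_iff)
      show "\<forall>m t. m < N \<and> 1/2 \<le> t \<and> t \<le> 3/2 \<longrightarrow> DERIV (diff m) t :> diff (Suc m) t"
        using D by blast
    qed (use N y False in auto)
    then obtain t where tt: "(if 1 + y < 1 then 1 + y < t \<and> t < 1 else 1 < t \<and> t < 1 + y)"
      and eq: "(1 + y) powr a = (\<Sum>m<N. (diff m 1 / fact m) * y^m) + (diff N t / fact N) * y^N"
      by auto
    have t: "1/2 \<le> t" "t \<le> 3/2" using tt y by (auto split: if_splits)
    have d1: "diff m 1 / fact m = (\<Prod>i<m. (a - real i)) / fact m" for m by (simp add: diff_def)
    have "\<bar>(1 + y) powr a - (\<Sum>m<N. ((\<Prod>i<m. (a - real i)) / fact m) * y ^ m)\<bar> = \<bar>diff N t / fact N\<bar> * \<bar>y\<bar> ^ N"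
      by (simp add: eq d1 abs_mult power_abs)
    also have "\<bar>diff N t / fact N\<bar> = P * t powr (a - real N) / fact N"
      using t by (simp add: diff_def P_def abs_mult)
    also have "\<dots> \<le> C"
      unfolding C_def using bnd[OF t, of "a - real N"]
      by (intro divide_right_mono mult_left_mono) (auto simp: P_def)
    finally show ?thesis by (simp add: mult_right_mono)
  qed
  then show ?thesis by blast
qed

locale dsys = tsys T for T +
  fixes D :: "real set" and \<delta> :: real
  assumes dpos: "\<delta> > 0"
  and D0: "0 \<in> D"
  and Dadd: "\<lbrakk>x \<in> D; y \<in> D\<rbrakk> \<Longrightarrow> x + y \<in> D"
  and Dge: "\<lbrakk>x \<in> D; x \<noteq> 0\<rbrakk> \<Longrightarrow> \<delta> \<le> x"
  and Dfin: "finite {\<omega>\<in>D. \<omega> \<le> W}"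
begin

lemma Dnn: "x \<in> D \<Longrightarrow> 0 \<le> x"
  using Dge dpos by (cases "x = 0") force+

definition dsum :: "real set \<Rightarrow> (real \<Rightarrow> real) \<Rightarrow> real \<Rightarrow> real" where
  "dsum S c x = (\<Sum>\<omega>\<in>S. c \<omega> * T x powr \<omega>)"

definition Exp :: "nat \<Rightarrow> (real \<Rightarrow> real) \<Rightarrow> bool" where
  "Exp N g \<longleftrightarrow> (\<exists>S c. finite S \<and> S \<subseteq> D \<and> (\<lambda>x. g x - dsum S c x) \<in> O(\<lambda>x. T x powr (real N * \<delta>)))"

lemma dsum_add:
  assumes "finite S" "finite S'"
  shows "dsum S c x + dsum S' c' x =
    dsum (S \<union> S') (\<lambda>\<omega>. (if \<omega> \<in> S then c \<omega> else 0) + (if \<omega> \<in> S' then c' \<omega> else 0)) x"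
proof -
  have 1: "dsum S c x = (\<Sum>\<omega>\<in>S \<union> S'. (if \<omega> \<in> S then c \<omega> else 0) * T x powr \<omega>)"
    unfolding dsum_def using assms by (intro sum.mono_neutral_cong_left) auto
  have 2: "dsum S' c' x = (\<Sum>\<omega>\<in>S \<union> S'. (if \<omega> \<in> S' then c' \<omega> else 0) * T x powr \<omega>)"
    unfolding dsum_def using assms by (intro sum.mono_neutral_cong_left) auto
  show ?thesis unfolding 1 2 by (simp add: dsum_def sum.distrib[symmetric] distrib_right)
qed

lemma dsum_mult:
  assumes "finite S" "finite S'"
  shows "dsum S c x * dsum S' c' x =
    dsum ((\<lambda>(a, b). a + b) ` (S \<times> S'))
       (\<lambda>\<sigma>. \<Sum>p\<in>{p\<in>S \<times> S'. fst p + snd p = \<sigma>}. c (fst p) * c' (snd p)) x"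
proof -
  have "dsum S c x * dsum S' c' x = (\<Sum>p\<in>S \<times> S'. c (fst p) * c' (snd p) * T x powr (fst p + snd p))"
    unfolding dsum_def sum_product sum.cartesian_product
    by (intro sum.cong refl) (auto simp: powr_add)
  also have "\<dots> = (\<Sum>\<sigma>\<in>(\<lambda>(a, b). a + b) ` (S \<times> S').
      (\<Sum>p\<in>{p\<in>S \<times> S'. (\<lambda>(a, b). a + b) p = \<sigma>}. c (fst p) * c' (snd p) * T x powr (fst p + snd p)))"
    using assms by (intro sum.group[symmetric]) auto
  also have "\<dots> = dsum ((\<lambda>(a, b). a + b) ` (S \<times> S'))
       (\<lambda>\<sigma>. \<Sum>p\<in>{p\<in>S \<times> S'. fst p + snd p = \<sigma>}. c (fst p) * c' (snd p)) x"
    unfolding dsum_def sum_distrib_right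
    by (intro sum.cong refl) (auto simp: case_prod_beta)
  finally show ?thesis .
qed

lemma dsum_mult_D: "S \<subseteq> D \<Longrightarrow> S' \<subseteq> D \<Longrightarrow> (\<lambda>(a, b). a + b) ` (S \<times> S') \<subseteq> D"
  using Dadd by auto

lemma dsum_bigo1: "S \<subseteq> D \<Longrightarrow> dsum S c \<in> O(\<lambda>_. 1)"
  unfolding dsum_def
  by (intro big_sum_in_bigo landau_o.big.mult_left[of _ _ _ "\<lambda>_. c _", simplified]) 
     (auto intro!: powr_bigo1 Dnn)

lemma dsum0_bigo: "S \<subseteq> D - {0} \<Longrightarrow> dsum S c \<in> O(\<lambda>x. T x powr \<delta>)"
  unfolding dsum_def
  by (intro big_sum_in_bigo landau_o.big.mult_left[of _ _ _ "\<lambda>_. c _", simplified])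
     (auto intro!: powr_bigo Dge)

lemma Tdelta_bigo1: "(\<lambda>x. T x powr (real N * \<delta>)) \<in> O(\<lambda>_. 1)"
  using dpos by (intro powr_bigo1) auto

lemma Exp_cong: "Exp N g \<Longrightarrow> eventually (\<lambda>x. g x = h x) at_top \<Longrightarrow> Exp N h"
  unfolding Exp_def
proof (elim exE conjE)
  fix S c assume *: "finite S" "S \<subseteq> D" "(\<lambda>x. g x - dsum S c x) \<in> O(\<lambda>x. T x powr (real N * \<delta>))"
    and ev: "eventually (\<lambda>x. g x = h x) at_top"
  have "eventually (\<lambda>x. g x - dsum S c x = h x - dsum S c x) at_top" using ev by eventually_elim simp
  then have "(\<lambda>x. h x - dsum S c x) \<in> O(\<lambda>x. T x powr (real N * \<delta>))"
    using *(3) landau_o.big.in_cong by metis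
  with * show "\<exists>S c. finite S \<and> S \<subseteq> D \<and> (\<lambda>x. h x - dsum S c x) \<in> O(\<lambda>x. T x powr (real N * \<delta>))"
    by blast
qed

lemma Exp_bigo: "g \<in> O(\<lambda>x. T x powr (real N * \<delta>)) \<Longrightarrow> Exp N g"
  unfolding Exp_def by (intro exI[of _ "{}"]) (auto simp: dsum_def)

lemma Exp_dsum: "finite S \<Longrightarrow> S \<subseteq> D \<Longrightarrow> Exp N (dsum S c)"
  unfolding Exp_def by (intro exI[of _ S] exI[of _ c]) auto

lemma Exp_const: "Exp N (\<lambda>_. k)"
proof -
  have "Exp N (dsum {0} (\<lambda>_. k))" using D0 by (intro Exp_dsum) auto
  moreover have "eventually (\<lambda>x. dsum {0} (\<lambda>_. k) x = k) at_top"
    using Tpos by eventually_elim (simp add: dsum_def)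
  ultimately show ?thesis by (rule Exp_cong)
qed

lemma Exp_add:
  assumes "Exp N g" "Exp N h" shows "Exp N (\<lambda>x. g x + h x)"
proof -
  obtain S c where S: "finite S" "S \<subseteq> D" "(\<lambda>x. g x - dsum S c x) \<in> O(\<lambda>x. T x powr (real N * \<delta>))"
    using assms(1) unfolding Exp_def by blast
  obtain S' c' where S': "finite S'" "S' \<subseteq> D" "(\<lambda>x. h x - dsum S' c' x) \<in> O(\<lambda>x. T x powr (real N * \<delta>))"
    using assms(2) unfolding Exp_def by blast
  define c'' where "c'' = (\<lambda>\<omega>. (if \<omega> \<in> S then c \<omega> else 0) + (if \<omega> \<in> S' then c' \<omega> else 0))"
  have "(\<lambda>x. (g x - dsum S c x) + (h x - dsum S' c' x)) \<in> O(\<lambda>x. T x powr (real N * \<delta>))"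
    by (rule sum_in_bigo(1)[OF S(3) S'(3)])
  also have "(\<lambda>x. (g x - dsum S c x) + (h x - dsum S' c' x)) = (\<lambda>x. (g x + h x) - dsum (S \<union> S') c'' x)"
    unfolding c''_def by (simp add: dsum_add[OF S(1) S'(1), of c _ c', symmetric] fun_eq_iff)
  finally show ?thesis unfolding Exp_def using S S' by (intro exI[of _ "S \<union> S'"] exI[of _ c'']) auto
qed

lemma Exp_cmult:
  assumes "Exp N g" shows "Exp N (\<lambda>x. k * g x)"
proof -
  obtain S c where S: "finite S" "S \<subseteq> D" "(\<lambda>x. g x - dsum S c x) \<in> O(\<lambda>x. T x powr (real N * \<delta>))"
    using assms(1) unfolding Exp_def by blast
  have "(\<lambda>x. k * (g x - dsum S c x)) \<in> O(\<lambda>x. T x powr (real N * \<delta>))"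
    using S(3) by (cases "k = 0") auto
  also have "(\<lambda>x. k * (g x - dsum S c x)) = (\<lambda>x. k * g x - dsum S (\<lambda>\<omega>. k * c \<omega>) x)"
    by (auto simp: dsum_def sum_distrib_left algebra_simps fun_eq_iff)
  finally show ?thesis unfolding Exp_def using S by blast
qed

lemma Exp_uminus: "Exp N g \<Longrightarrow> Exp N (\<lambda>x. - g x)"
  using Exp_cmult[of N g "-1"] by simp

lemma Exp_diff: "Exp N g \<Longrightarrow> Exp N h \<Longrightarrow> Exp N (\<lambda>x. g x - h x)"
  using Exp_add[of N g "\<lambda>x. - h x"] Exp_uminus[of N h] by simp

lemma Exp_mult:
  assumes "Exp N g" "Exp N h" shows "Exp N (\<lambda>x. g x * h x)"
proof -
  obtain S c where S: "finite S" "S \<subseteq> D" "(\<lambda>x. g x - dsum S c x) \<in> O(\<lambda>x. T x powr (real N * \<delta>))"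
    using assms(1) unfolding Exp_def by blast
  obtain S' c' where S': "finite S'" "S' \<subseteq> D" "(\<lambda>x. h x - dsum S' c' x) \<in> O(\<lambda>x. T x powr (real N * \<delta>))"
    using assms(2) unfolding Exp_def by blast
  define E where "E = (\<lambda>x. g x - dsum S c x)"
  define E' where "E' = (\<lambda>x. h x - dsum S' c' x)"
  have E: "E \<in> O(\<lambda>x. T x powr (real N * \<delta>))" unfolding E_def by (rule S(3))
  have E': "E' \<in> O(\<lambda>x. T x powr (real N * \<delta>))" unfolding E'_def by (rule S'(3))
  have E1: "E \<in> O(\<lambda>_. 1)" using landau_o.big_trans[OF E Tdelta_bigo1] .
  have t1: "(\<lambda>x. dsum S c x * E' x) \<in> O(\<lambda>x. 1 * T x powr (real N * \<delta>))"
    by (intro landau_o.big.mult dsum_bigo1 S E')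
  have t2: "(\<lambda>x. E x * dsum S' c' x) \<in> O(\<lambda>x. T x powr (real N * \<delta>) * 1)"
    by (intro landau_o.big.mult dsum_bigo1 S' E)
  have t3: "(\<lambda>x. E x * E' x) \<in> O(\<lambda>x. 1 * T x powr (real N * \<delta>))"
    by (intro landau_o.big.mult E1 E')
  define S'' where "S'' = (\<lambda>(a, b). a + b) ` (S \<times> S')"
  define c'' where "c'' = (\<lambda>\<sigma>. \<Sum>p\<in>{p\<in>S \<times> S'. fst p + snd p = \<sigma>}. c (fst p) * c' (snd p))"
  have "(\<lambda>x. dsum S c x * E' x + E x * dsum S' c' x + E x * E' x) \<in> O(\<lambda>x. T x powr (real N * \<delta>))"
    using t1 t2 t3 by (intro sum_in_bigo) auto
  also have "(\<lambda>x. dsum S c x * E' x + E x * dsum S' c' x + E x * E' x) = (\<lambda>x. g x * h x - dsum S'' c'' x)"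
    using dsum_mult[OF S(1) S'(1), of c _ c']
    by (auto simp: E_def E'_def S''_def c''_def fun_eq_iff algebra_simps)
  finally show ?thesis unfolding Exp_def using S S' dsum_mult_D[of S S']
    by (intro exI[of _ S''] exI[of _ c'']) (auto simp: S''_def)
qed

lemma Exp_power: "Exp N g \<Longrightarrow> Exp N (\<lambda>x. g x ^ m)"
  by (induction m) (auto intro: Exp_mult Exp_const)

lemma Exp_sum: "finite A \<Longrightarrow> (\<And>i. i \<in> A \<Longrightarrow> Exp N (g i)) \<Longrightarrow> Exp N (\<lambda>x. \<Sum>i\<in>A. g i x)"
  by (induction A rule: finite_induct) (auto intro: Exp_add Exp_const)

lemma Exp_mono: assumes "Exp M g" "N \<le> M" shows "Exp N g"
proof -
  obtain S c where S: "finite S" "S \<subseteq> D" "(\<lambda>x. g x - dsum S c x) \<in> O(\<lambda>x. T x powr (real M * \<delta>))"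
    using assms(1) unfolding Exp_def by blast
  have "(\<lambda>x. T x powr (real M * \<delta>)) \<in> O(\<lambda>x. T x powr (real N * \<delta>))"
    using assms(2) dpos by (intro powr_bigo mult_right_mono) auto
  from landau_o.big_trans[OF S(3) this] S(1,2) show ?thesis unfolding Exp_def by blast
qed

lemma Exp0: "g \<in> O(\<lambda>_. 1) \<Longrightarrow> Exp 0 g"
  by (intro Exp_bigo) (use powr0_bigo(2) in \<open>auto intro: landau_o.big_trans\<close>)

lemma Exp_monom:
  assumes "\<gamma> \<in> D" "Exp N g" shows "Exp N (\<lambda>x. T x powr \<gamma> * g x)"
proof -
  have "Exp N (dsum {\<gamma>} (\<lambda>_. 1))" using assms(1) by (intro Exp_dsum) auto
  moreover have "dsum {\<gamma>} (\<lambda>_. 1) = (\<lambda>x. T x powr \<gamma>)" by (simp add: dsum_def fun_eq_iff)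
  ultimately have "Exp N (\<lambda>x. T x powr \<gamma>)" by simp
  then show ?thesis using assms(2) by (rule Exp_mult)
qed

lemma Exp_monom_Suc:
  assumes "\<gamma> \<in> D" "\<gamma> \<noteq> 0" "Exp N g" shows "Exp (Suc N) (\<lambda>x. T x powr \<gamma> * g x)"
proof -
  obtain S c where S: "finite S" "S \<subseteq> D" "(\<lambda>x. g x - dsum S c x) \<in> O(\<lambda>x. T x powr (real N * \<delta>))"
    using assms(3) unfolding Exp_def by blast
  have ge: "\<gamma> \<ge> \<delta>" using Dge assms by auto
  have "(\<lambda>x. T x powr \<gamma> * (g x - dsum S c x)) \<in> O(\<lambda>x. T x powr \<gamma> * T x powr (real N * \<delta>))"
    using S(3) by (rule landau_o.big.mult_left)
  also have "(\<lambda>x. T x powr \<gamma> * T x powr (real N * \<delta>)) = (\<lambda>x. T x powr (\<gamma> + real N * \<delta>))"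
    by (simp add: powr_add)
  also have "(\<lambda>x. T x powr (\<gamma> + real N * \<delta>)) \<in> O(\<lambda>x. T x powr (real (Suc N) * \<delta>))"
    using ge by (intro powr_bigo) (simp add: algebra_simps)
  finally have 1: "Exp (Suc N) (\<lambda>x. T x powr \<gamma> * (g x - dsum S c x))" by (rule Exp_bigo)
  have "Exp (Suc N) (dsum S c)" using S by (intro Exp_dsum)
  then have 2: "Exp (Suc N) (\<lambda>x. T x powr \<gamma> * dsum S c x)" by (rule Exp_monom[OF assms(1)])
  from Exp_add[OF 1 2] show ?thesis by (simp add: algebra_simps)
qed

lemma Exp_smallT:
  assumes N: "N > 0" and E: "Exp N y" and lim: "(y \<longlongrightarrow> 0) at_top"
  shows "y \<in> O(\<lambda>x. T x powr \<delta>)"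
proof -
  obtain S c where S: "finite S" "S \<subseteq> D" "(\<lambda>x. y x - dsum S c x) \<in> O(\<lambda>x. T x powr (real N * \<delta>))"
    using E unfolding Exp_def by blast
  have NO: "(\<lambda>x. T x powr (real N * \<delta>)) \<in> O(\<lambda>x. T x powr \<delta>)"
    using N dpos by (intro powr_bigo) auto
  have r1: "(\<lambda>x. y x - dsum S c x) \<in> O(\<lambda>x. T x powr \<delta>)" using landau_o.big_trans[OF S(3) NO] .
  have split: "dsum S c x = (if 0 \<in> S then c 0 * T x powr 0 else 0) + dsum (S - {0}) c x" for x
  proof (cases "0 \<in> S")
    case True
    then show ?thesis using S(1) by (simp add: dsum_def sum.remove)
  next
    case False
    then show ?thesis by simp
  qed
  have r2: "dsum (S - {0}) c \<in> O(\<lambda>x. T x powr \<delta>)" using S(2) by (intro dsum0_bigo) auto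
  define k where "k = (if 0 \<in> S then c 0 else 0)"
  have evk: "eventually (\<lambda>x. (if 0 \<in> S then c 0 * T x powr 0 else 0) = k) at_top"
    using Tpos by eventually_elim (auto simp: k_def)
  have "((\<lambda>x. T x powr (real N * \<delta>)) \<longlongrightarrow> 0) at_top" using N dpos by (intro powr_tendsto0) auto
  then have a: "((\<lambda>x. y x - dsum S c x) \<longlongrightarrow> 0) at_top" by (rule bigo_tendsto0[OF S(3)])
  have "((\<lambda>x. T x powr \<delta>) \<longlongrightarrow> 0) at_top" using dpos by (intro powr_tendsto0) auto
  then have b: "(dsum (S - {0}) c \<longlongrightarrow> 0) at_top" by (rule bigo_tendsto0[OF r2])
  have lim3: "((\<lambda>x. y x - (y x - dsum S c x) - dsum (S - {0}) c x) \<longlongrightarrow> 0) at_top"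
    using tendsto_diff[OF tendsto_diff[OF lim a] b] by simp
  have ev2: "eventually (\<lambda>x. y x - (y x - dsum S c x) - dsum (S - {0}) c x = k) at_top"
    using evk by eventually_elim (simp add: split)
  have "((\<lambda>_::real. k) \<longlongrightarrow> 0) at_top" using lim3 tendsto_cong[OF ev2] by blast
  then have k0: "k = 0" using tendsto_unique[OF trivial_limit_at_top_linorder _ tendsto_const] by blast
  have "(\<lambda>x. (y x - dsum S c x) + dsum (S - {0}) c x) \<in> O(\<lambda>x. T x powr \<delta>)"
    by (rule sum_in_bigo(1)[OF r1 r2])
  moreover have "eventually (\<lambda>x. (y x - dsum S c x) + dsum (S - {0}) c x = y x) at_top"
    using evk by eventually_elim (simp add: split k0)
  ultimately show ?thesis using landau_o.big.in_cong by metis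
qed

lemma Exp_comp:
  assumes N: "N > 0" and E: "Exp N y" and lim: "(y \<longlongrightarrow> 0) at_top"
  shows "Exp N (\<lambda>x. (1 + y x) powr a)"
proof -
  have yO: "y \<in> O(\<lambda>x. T x powr \<delta>)" by (rule Exp_smallT[OF N E lim])
  obtain C where C: "\<And>y. \<bar>y\<bar> \<le> 1/2 \<Longrightarrow>
     \<bar>(1 + y) powr a - (\<Sum>m<N. ((\<Prod>i<m. (a - real i)) / fact m) * y ^ m)\<bar> \<le> C * \<bar>y\<bar> ^ N"
    using taylor_powr[OF N, of a] by blast
  have "eventually (\<lambda>x. dist (y x) 0 < 1/2) at_top" using lim by (rule tendstoD) simp
  then have ev: "eventually (\<lambda>x. \<bar>y x\<bar> \<le> 1/2) at_top" by eventually_elim simp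
  define Q where "Q x = (\<Sum>m<N. ((\<Prod>i<m. (a - real i)) / fact m) * y x ^ m)" for x
  have "eventually (\<lambda>x. norm ((1 + y x) powr a - Q x) \<le> C * norm (y x ^ N)) at_top"
    using ev
  proof eventually_elim
    case (elim x)
    show ?case using C[OF elim] by (simp add: Q_def power_abs)
  qed
  then have "(\<lambda>x. (1 + y x) powr a - Q x) \<in> O(\<lambda>x. y x ^ N)" by (rule bigoI)
  also have "(\<lambda>x. y x ^ N) \<in> O(\<lambda>x. (T x powr \<delta>) ^ N)" by (rule landau_o.big_power[OF yO])
  also have "eventually (\<lambda>x. norm ((T x powr \<delta>) ^ N) \<le> 1 * norm (T x powr (real N * \<delta>))) at_top"
    using Tpos
  proof eventually_elim
    case (elim x)
    then show ?case by (simp add: powr_power)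
  qed
  then have "(\<lambda>x. (T x powr \<delta>) ^ N) \<in> O(\<lambda>x. T x powr (real N * \<delta>))" by (rule bigoI)
  finally have 1: "Exp N (\<lambda>x. (1 + y x) powr a - Q x)" by (rule Exp_bigo)
  have 2: "Exp N Q" unfolding Q_def
    by (intro Exp_sum Exp_cmult Exp_power E) auto
  from Exp_add[OF 1 2] show ?thesis by simp
qed

end


context dsys begin

lemma Exp_choose:
  assumes "Exp N g"
  shows "\<exists>S c. finite S \<and> S \<subseteq> D \<and> (\<lambda>x. g x - dsum S c x) \<in> O(\<lambda>x. T x powr (real N * \<delta>))
     \<and> (\<forall>\<omega>. \<omega> \<notin> S \<longrightarrow> c \<omega> = 0)"
proof -
  obtain S c where S: "finite S" "S \<subseteq> D" "(\<lambda>x. g x - dsum S c x) \<in> O(\<lambda>x. T x powr (real N * \<delta>))"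
    using assms unfolding Exp_def by blast
  define c' where "c' \<omega> = (if \<omega> \<in> S then c \<omega> else 0)" for \<omega>
  have "dsum S c' = dsum S c" by (auto simp: dsum_def c'_def fun_eq_iff intro!: sum.cong)
  then show ?thesis using S by (intro exI[of _ S] exI[of _ c']) (auto simp: c'_def)
qed

lemma dextract:
  assumes allN: "\<And>N. Exp N G"
  shows "\<exists>A. (\<forall>\<omega>. \<omega> \<notin> D \<longrightarrow> A \<omega> = 0) \<and>
    (\<forall>W. (\<lambda>x. G x - (\<Sum>\<omega>\<in>{\<omega>\<in>D. \<omega> \<le> W}. A \<omega> * T x powr \<omega>)) \<in> o(\<lambda>x. T x powr W))"
proof -
  define P where "P N = (\<lambda>(S, c). finite S \<and> S \<subseteq> D \<and>
      (\<lambda>x. G x - dsum S c x) \<in> O(\<lambda>x. T x powr (real N * \<delta>)) \<and> (\<forall>\<omega>. \<omega> \<notin> S \<longrightarrow> c \<omega> = 0))" for N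
  have ex: "\<exists>Sc. P N Sc" for N using Exp_choose[OF allN[of N]] by (auto simp: P_def)
  define Sc where "Sc N = (SOME Sc. P N Sc)" for N
  have PSc: "P N (Sc N)" for N unfolding Sc_def by (rule someI_ex[OF ex])
  define S where "S N = fst (Sc N)" for N
  define a where "a N = snd (Sc N)" for N
  have Sfin: "finite (S N)" and SD: "S N \<subseteq> D"
    and SO: "(\<lambda>x. G x - dsum (S N) (a N) x) \<in> O(\<lambda>x. T x powr (real N * \<delta>))"
    and a0: "\<And>\<omega>. \<omega> \<notin> S N \<Longrightarrow> a N \<omega> = 0" for N
    using PSc[of N] by (auto simp: P_def S_def a_def split: prod.splits)
  have agree: "a N \<omega> = a M \<omega>" if NM: "N \<le> M" and om: "\<omega> < real N * \<delta>" for N M \<omega>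
  proof -
    define U where "U = S N \<union> S M"
    have Ufin: "finite U" using Sfin by (simp add: U_def)
    have eqN: "dsum (S N) (a N) x = (\<Sum>\<omega>\<in>U. a N \<omega> * T x powr \<omega>)" for x
      unfolding dsum_def using Ufin a0[of _ N] by (intro sum.mono_neutral_left) (auto simp: U_def)
    have eqM: "dsum (S M) (a M) x = (\<Sum>\<omega>\<in>U. a M \<omega> * T x powr \<omega>)" for x
      unfolding dsum_def using Ufin a0[of _ M] by (intro sum.mono_neutral_left) (auto simp: U_def)
    have MN: "(\<lambda>x. T x powr (real M * \<delta>)) \<in> O(\<lambda>x. T x powr (real N * \<delta>))"
      using NM dpos by (intro powr_bigo mult_right_mono) auto
    have SM: "(\<lambda>x. G x - dsum (S M) (a M) x) \<in> O(\<lambda>x. T x powr (real N * \<delta>))"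
      using landau_o.big_trans[OF SO[of M] MN] .
    have "(\<lambda>x. (G x - dsum (S N) (a N) x) - (G x - dsum (S M) (a M) x)) \<in> O(\<lambda>x. T x powr (real N * \<delta>))"
      by (rule sum_in_bigo(2)[OF SO[of N] SM])
    then have dO: "(\<lambda>x. \<Sum>\<omega>\<in>U. (a M \<omega> - a N \<omega>) * T x powr \<omega>) \<in> O(\<lambda>x. T x powr (real N * \<delta>))"
      by (simp add: eqN eqM sum_subtractf[symmetric] left_diff_distrib)
    define U1 where "U1 = {\<omega>\<in>U. \<omega> < real N * \<delta>}"
    define U2 where "U2 = {\<omega>\<in>U. \<not> \<omega> < real N * \<delta>}"
    have U12: "U = U1 \<union> U2" "U1 \<inter> U2 = {}" "finite U1" "finite U2"
      using Ufin by (auto simp: U1_def U2_def)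
    have splitU: "(\<Sum>\<omega>\<in>U. (a M \<omega> - a N \<omega>) * T x powr \<omega>) =
        (\<Sum>\<omega>\<in>U1. (a M \<omega> - a N \<omega>) * T x powr \<omega>) + (\<Sum>\<omega>\<in>U2. (a M \<omega> - a N \<omega>) * T x powr \<omega>)" for x
      using U12 by (simp add: sum.union_disjoint)
    have O2: "(\<lambda>x. \<Sum>\<omega>\<in>U2. (a M \<omega> - a N \<omega>) * T x powr \<omega>) \<in> O(\<lambda>x. T x powr (real N * \<delta>))"
    proof (intro big_sum_in_bigo)
      fix \<omega> assume "\<omega> \<in> U2"
      then have "real N * \<delta> \<le> \<omega>" by (auto simp: U2_def)
      then have "(\<lambda>x. T x powr \<omega>) \<in> O(\<lambda>x. T x powr (real N * \<delta>))" by (rule powr_bigo)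
      then show "(\<lambda>x. (a M \<omega> - a N \<omega>) * T x powr \<omega>) \<in> O(\<lambda>x. T x powr (real N * \<delta>))"
        by (cases "a M \<omega> - a N \<omega> = 0") auto
    qed
    have "(\<lambda>x. (\<Sum>\<omega>\<in>U. (a M \<omega> - a N \<omega>) * T x powr \<omega>) - (\<Sum>\<omega>\<in>U2. (a M \<omega> - a N \<omega>) * T x powr \<omega>))
       \<in> O(\<lambda>x. T x powr (real N * \<delta>))" by (rule sum_in_bigo(2)[OF dO O2])
    then have O1: "(\<lambda>x. \<Sum>\<omega>\<in>U1. (a M \<omega> - a N \<omega>) * T x powr \<omega>) \<in> O(\<lambda>x. T x powr (real N * \<delta>))"
      by (simp add: splitU)
    show ?thesis
    proof (cases "\<omega> \<in> U")
      case False
      then show ?thesis using a0[of \<omega> N] a0[of \<omega> M] by (auto simp: U_def)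
    next
      case True
      then have wU1: "\<omega> \<in> U1" using om by (simp add: U1_def)
      define W' where "W' = Max U1"
      have "W' \<in> U1" unfolding W'_def using wU1 U12(3) by (intro Max_in) auto
      then have W'lt: "W' < real N * \<delta>" by (simp add: U1_def)
      have "(\<lambda>x. \<Sum>\<omega>\<in>U1. (a M \<omega> - a N \<omega>) * T x powr \<omega>) \<in> o(\<lambda>x. T x powr W')"
        by (rule landau_o.big_small_trans[OF O1 powr_smallo[OF W'lt]])
      moreover have "\<forall>\<omega>\<in>U1. \<omega> \<le> W'" using U12(3) by (simp add: W'_def)
      ultimately have "\<forall>\<omega>\<in>U1. a M \<omega> - a N \<omega> = 0"
        by (rule uniq[OF U12(3), where c="\<lambda>\<omega>. a M \<omega> - a N \<omega>"])
      then show ?thesis using wU1 by simp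
    qed
  qed
  define n where "n \<omega> = nat \<lceil>\<omega> / \<delta>\<rceil> + 1" for \<omega>
  have nbig: "\<omega> < real (n \<omega>) * \<delta>" for \<omega>
  proof -
    have "\<omega> / \<delta> \<le> real (nat \<lceil>\<omega> / \<delta>\<rceil>)" by linarith
    then have "\<omega> / \<delta> < real (n \<omega>)" by (simp add: n_def)
    then show ?thesis using dpos by (simp add: field_simps)
  qed
  define A where "A \<omega> = a (n \<omega>) \<omega>" for \<omega>
  have AD: "\<forall>\<omega>. \<omega> \<notin> D \<longrightarrow> A \<omega> = 0" using SD a0 unfolding A_def by blast
  have "(\<lambda>x. G x - (\<Sum>\<omega>\<in>{\<omega>\<in>D. \<omega> \<le> W}. A \<omega> * T x powr \<omega>)) \<in> o(\<lambda>x. T x powr W)" for W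
  proof -
    define N where "N = n W"
    have AN: "A \<omega> = a N \<omega>" if "\<omega> \<le> W" for \<omega>
    proof (cases "n \<omega> \<le> N")
      case True
      then show ?thesis unfolding A_def by (rule agree[OF _ nbig])
    next
      case False
      have "\<omega> < real N * \<delta>" using nbig[of W] that by (simp add: N_def)
      then show ?thesis unfolding A_def using False by (intro agree[symmetric]) auto
    qed
    have sum1: "(\<Sum>\<omega>\<in>{\<omega>\<in>D. \<omega> \<le> W}. A \<omega> * T x powr \<omega>) = (\<Sum>\<omega>\<in>{\<omega>\<in>S N. \<omega> \<le> W}. a N \<omega> * T x powr \<omega>)" for x
    proof -
      have "(\<Sum>\<omega>\<in>{\<omega>\<in>D. \<omega> \<le> W}. A \<omega> * T x powr \<omega>) = (\<Sum>\<omega>\<in>{\<omega>\<in>D. \<omega> \<le> W}. a N \<omega> * T x powr \<omega>)"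
        by (intro sum.cong) (auto simp: AN)
      also have "\<dots> = (\<Sum>\<omega>\<in>{\<omega>\<in>S N. \<omega> \<le> W}. a N \<omega> * T x powr \<omega>)"
        using Dfin[of W] SD[of N] a0[of _ N] by (intro sum.mono_neutral_right) auto
      finally show ?thesis .
    qed
    have sum2: "dsum (S N) (a N) x = (\<Sum>\<omega>\<in>{\<omega>\<in>S N. \<omega> \<le> W}. a N \<omega> * T x powr \<omega>)
        + (\<Sum>\<omega>\<in>{\<omega>\<in>S N. \<not> \<omega> \<le> W}. a N \<omega> * T x powr \<omega>)" for x
    proof -
      have "S N = {\<omega>\<in>S N. \<omega> \<le> W} \<union> {\<omega>\<in>S N. \<not> \<omega> \<le> W}" by auto
      then have "dsum (S N) (a N) x = (\<Sum>\<omega>\<in>{\<omega>\<in>S N. \<omega> \<le> W} \<union> {\<omega>\<in>S N. \<not> \<omega> \<le> W}. a N \<omega> * T x powr \<omega>)"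
        unfolding dsum_def by simp
      also have "\<dots> = (\<Sum>\<omega>\<in>{\<omega>\<in>S N. \<omega> \<le> W}. a N \<omega> * T x powr \<omega>)
        + (\<Sum>\<omega>\<in>{\<omega>\<in>S N. \<not> \<omega> \<le> W}. a N \<omega> * T x powr \<omega>)"
        using Sfin[of N] by (intro sum.union_disjoint) auto
      finally show ?thesis .
    qed
    have o1: "(\<lambda>x. G x - dsum (S N) (a N) x) \<in> o(\<lambda>x. T x powr W)"
      by (rule landau_o.big_small_trans[OF SO[of N] powr_smallo]) (use nbig[of W] in \<open>simp add: N_def\<close>)
    have o2: "(\<lambda>x. \<Sum>\<omega>\<in>{\<omega>\<in>S N. \<not> \<omega> \<le> W}. a N \<omega> * T x powr \<omega>) \<in> o(\<lambda>x. T x powr W)"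
    proof (intro big_sum_in_smallo)
      fix \<omega> assume "\<omega> \<in> {\<omega>\<in>S N. \<not> \<omega> \<le> W}"
      then have "W < \<omega>" by auto
      then have "(\<lambda>x. T x powr \<omega>) \<in> o(\<lambda>x. T x powr W)" by (rule powr_smallo)
      then show "(\<lambda>x. a N \<omega> * T x powr \<omega>) \<in> o(\<lambda>x. T x powr W)"
        by (cases "a N \<omega> = 0") auto
    qed
    have "(\<lambda>x. (G x - dsum (S N) (a N) x) + (\<Sum>\<omega>\<in>{\<omega>\<in>S N. \<not> \<omega> \<le> W}. a N \<omega> * T x powr \<omega>)) \<in> o(\<lambda>x. T x powr W)"
      by (rule sum_in_smallo(1)[OF o1 o2])
    also have "(\<lambda>x. (G x - dsum (S N) (a N) x) + (\<Sum>\<omega>\<in>{\<omega>\<in>S N. \<not> \<omega> \<le> W}. a N \<omega> * T x powr \<omega>))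
       = (\<lambda>x. G x - (\<Sum>\<omega>\<in>{\<omega>\<in>D. \<omega> \<le> W}. A \<omega> * T x powr \<omega>))"
      by (simp add: fun_eq_iff sum1 sum2)
    finally show ?thesis .
  qed
  with AD show ?thesis by blast
qed

lemma extract_A0:
  assumes exp: "(\<lambda>x. G x - (\<Sum>\<omega>\<in>{\<omega>\<in>D. \<omega> \<le> 0}. A \<omega> * T x powr \<omega>)) \<in> o(\<lambda>x. T x powr 0)"
    and lim: "(G \<longlongrightarrow> L) at_top"
  shows "A 0 = L"
proof -
  have set0: "{\<omega>\<in>D. \<omega> \<le> 0} = {0}"
  proof
    show "{\<omega>\<in>D. \<omega> \<le> 0} \<subseteq> {0}" using Dnn by (auto intro: order.antisym)
    show "{0} \<subseteq> {\<omega>\<in>D. \<omega> \<le> 0}" using D0 by auto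
  qed
  have e2: "(\<lambda>x. G x - A 0 * T x powr 0) \<in> o(\<lambda>x. T x powr 0)" using exp by (simp add: set0)
  have "((\<lambda>x. G x - A 0 * T x powr 0) \<longlongrightarrow> 0) at_top"
    by (rule smallo_tendsto0[OF e2 powr_bigo1]) simp
  moreover have ev: "eventually (\<lambda>x. G x - A 0 * T x powr 0 = G x - A 0) at_top"
    using Tpos by eventually_elim simp
  ultimately have "((\<lambda>x. G x - A 0) \<longlongrightarrow> 0) at_top" using tendsto_cong[OF ev] by blast
  moreover have "((\<lambda>x. G x - A 0) \<longlongrightarrow> L - A 0) at_top" by (intro tendsto_diff lim tendsto_const)
  ultimately have "L - A 0 = 0" using tendsto_unique[OF trivial_limit_at_top_linorder] by blast
  then show ?thesis by simp
qed

end


definition Phif :: "real \<Rightarrow> real \<Rightarrow> (real \<Rightarrow> real) \<Rightarrow> real \<Rightarrow> real \<Rightarrow> real" where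
  "Phif d q f z \<xi> = z powr (1 / d) - 2 * pi * tw_eval f (q * z / \<xi>)"

lemma crit_expansion_alt:
  "crit_expansion d q f A \<longleftrightarrow> (\<forall>\<omega>. \<omega> \<notin> Dset f \<longrightarrow> A \<omega> = 0) \<and> A 0 \<noteq> 0 \<and>
    (\<exists>R x0. (\<forall>\<^sub>F \<xi> in at_top. 0 < x0 \<xi> \<and> R \<le> q * x0 \<xi> / \<xi> \<and>
               ((\<lambda>z. Phif d q f z \<xi>) has_real_derivative 0) (at (x0 \<xi>)) \<and>
               (\<forall>z>0. R \<le> q * z / \<xi> \<and> ((\<lambda>z. Phif d q f z \<xi>) has_real_derivative 0) (at z)
                      \<longrightarrow> z = x0 \<xi>)) \<and>
     (\<forall>W. (\<lambda>\<xi>. Phif d q f (x0 \<xi>) \<xi> / (2 * pi)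
          - \<xi> powr (lexp f / (d * lexp f - 1)) * (\<Sum>\<omega>\<in>{\<omega>\<in>Dset f. \<omega> \<le> W}. A \<omega> * \<xi> powr (- \<omega> / (d * lexp f - 1))))
        \<in> o(\<lambda>\<xi>. \<xi> powr ((lexp f - W) / (d * lexp f - 1)))))"
  by (simp add: crit_expansion_def Phif_def[abs_def] Let_def)

section \<open>The exponent set\<close>

lemma twist_fin: "is_twist f \<Longrightarrow> finite (tw_supp f)"
  by (simp add: is_twist_def)

lemma lexp_in: "is_twist f \<Longrightarrow> lexp f \<in> tw_supp f"
  unfolding is_twist_def lexp_def by (intro Max_in) auto

lemma lexp_ge: "is_twist f \<Longrightarrow> \<kappa> \<in> tw_supp f \<Longrightarrow> \<kappa> \<le> lexp f"
  unfolding is_twist_def lexp_def by (intro Max_ge) auto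

lemma supp_nn: "is_twist f \<Longrightarrow> \<kappa> \<in> tw_supp f \<Longrightarrow> 0 \<le> \<kappa>"
  unfolding is_twist_def by auto

lemma gap_pos: "is_twist f \<Longrightarrow> \<kappa> \<in> tw_supp f - {lexp f} \<Longrightarrow> 0 < lexp f - \<kappa>"
  using lexp_ge[of f \<kappa>] by auto

definition gapmin :: "(real \<Rightarrow> real) \<Rightarrow> real" where
  "gapmin f = (if tw_supp f - {lexp f} = {} then 1 else Min ((\<lambda>\<kappa>. lexp f - \<kappa>) ` (tw_supp f - {lexp f})))"

lemma gapmin_pos: "is_twist f \<Longrightarrow> 0 < gapmin f"
proof -
  assume tw: "is_twist f"
  show ?thesis
  proof (cases "tw_supp f - {lexp f} = {}")
    case True then show ?thesis by (simp add: gapmin_def)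
  next
    case False
    have fin: "finite ((\<lambda>\<kappa>. lexp f - \<kappa>) ` (tw_supp f - {lexp f}))" using twist_fin[OF tw] by simp
    have "gapmin f \<in> (\<lambda>\<kappa>. lexp f - \<kappa>) ` (tw_supp f - {lexp f})"
      unfolding gapmin_def using False fin by simp
    then obtain \<kappa> where "\<kappa> \<in> tw_supp f - {lexp f}" "gapmin f = lexp f - \<kappa>" by blast
    then show ?thesis using gap_pos[OF tw, of \<kappa>] by simp
  qed
qed

lemma gapmin_le: "is_twist f \<Longrightarrow> \<kappa> \<in> tw_supp f - {lexp f} \<Longrightarrow> gapmin f \<le> lexp f - \<kappa>"
proof -
  assume tw: "is_twist f" and k: "\<kappa> \<in> tw_supp f - {lexp f}"
  have fin: "finite ((\<lambda>\<kappa>. lexp f - \<kappa>) ` (tw_supp f - {lexp f}))" using twist_fin[OF tw] by simp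
  have ne: "tw_supp f - {lexp f} \<noteq> {}" using k by auto
  show ?thesis unfolding gapmin_def using ne fin k by (simp add: Min_le)
qed

lemma Dset_0: "0 \<in> Dset f"
  unfolding Dset_def by (intro CollectI exI[of _ "\<lambda>_. 0"]) simp

lemma Dset_add: "x \<in> Dset f \<Longrightarrow> y \<in> Dset f \<Longrightarrow> x + y \<in> Dset f"
proof -
  assume "x \<in> Dset f" "y \<in> Dset f"
  then obtain n m where n: "x = (\<Sum>\<kappa>\<in>tw_supp f - {lexp f}. real (n \<kappa>) * (lexp f - \<kappa>))"
    and m: "y = (\<Sum>\<kappa>\<in>tw_supp f - {lexp f}. real (m \<kappa>) * (lexp f - \<kappa>))"
    unfolding Dset_def by blast
  have xy: "x + y = (\<Sum>\<kappa>\<in>tw_supp f - {lexp f}. real ((\<lambda>\<kappa>. n \<kappa> + m \<kappa>) \<kappa>) * (lexp f - \<kappa>))"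
    unfolding n m by (simp add: sum.distrib[symmetric] algebra_simps)
  show ?thesis unfolding Dset_def mem_Collect_eq by (rule exI[of _ "\<lambda>\<kappa>. n \<kappa> + m \<kappa>"]) (rule xy)
qed

lemma Dset_gap: "\<kappa> \<in> tw_supp f - {lexp f} \<Longrightarrow> finite (tw_supp f) \<Longrightarrow> lexp f - \<kappa> \<in> Dset f"
proof -
  assume k: "\<kappa> \<in> tw_supp f - {lexp f}" and fin: "finite (tw_supp f)"
  have "(\<Sum>\<kappa>'\<in>tw_supp f - {lexp f}. real ((\<lambda>\<kappa>'. if \<kappa>' = \<kappa> then 1 else 0) \<kappa>') * (lexp f - \<kappa>'))
     = (\<Sum>\<kappa>'\<in>tw_supp f - {lexp f}. if \<kappa>' = \<kappa> then lexp f - \<kappa>' else 0)"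
    by (intro sum.cong) auto
  also have "\<dots> = lexp f - \<kappa>" using k fin by (simp add: sum.delta)
  finally have "(\<Sum>\<kappa>'\<in>tw_supp f - {lexp f}. real ((\<lambda>\<kappa>'. if \<kappa>' = \<kappa> then 1 else 0) \<kappa>') * (lexp f - \<kappa>')) = lexp f - \<kappa>" .
  then show ?thesis unfolding Dset_def by (intro CollectI exI[of _ "\<lambda>\<kappa>'. if \<kappa>' = \<kappa> then 1 else 0"]) simp
qed

lemma Dset_ge: assumes tw: "is_twist f" and w: "\<omega> \<in> Dset f" "\<omega> \<noteq> 0" shows "gapmin f \<le> \<omega>"
proof -
  obtain n where n: "\<omega> = (\<Sum>\<kappa>\<in>tw_supp f - {lexp f}. real (n \<kappa>) * (lexp f - \<kappa>))"
    using w unfolding Dset_def by blast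
  have fin: "finite (tw_supp f - {lexp f})" using twist_fin[OF tw] by simp
  have "\<exists>\<kappa>\<in>tw_supp f - {lexp f}. n \<kappa> \<noteq> 0"
  proof (rule ccontr)
    assume "\<not> (\<exists>\<kappa>\<in>tw_supp f - {lexp f}. n \<kappa> \<noteq> 0)"
    then have "\<forall>\<kappa>\<in>tw_supp f - {lexp f}. n \<kappa> = 0" by blast
    then have "\<omega> = 0" unfolding n by simp
    with w show False by simp
  qed
  then obtain \<kappa> where k: "\<kappa> \<in> tw_supp f - {lexp f}" "n \<kappa> \<noteq> 0" by blast
  have nn: "\<forall>\<kappa>'\<in>tw_supp f - {lexp f}. 0 \<le> real (n \<kappa>') * (lexp f - \<kappa>')"
  proof
    fix \<kappa>' assume "\<kappa>' \<in> tw_supp f - {lexp f}"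
    then have "0 < lexp f - \<kappa>'" by (rule gap_pos[OF tw])
    then show "0 \<le> real (n \<kappa>') * (lexp f - \<kappa>')" by simp
  qed
  have "gapmin f \<le> lexp f - \<kappa>" by (rule gapmin_le[OF tw k(1)])
  also have "\<dots> \<le> real (n \<kappa>) * (lexp f - \<kappa>)"
    using k(2) gap_pos[OF tw k(1)] by (simp add: mult_le_cancel_right1)
  also have "\<dots> \<le> \<omega>" unfolding n by (rule member_le_sum) (use fin k(1) nn in auto)
  finally show ?thesis .
qed

lemma Dset_nn: assumes "is_twist f" "\<omega> \<in> Dset f" shows "0 \<le> \<omega>"
proof (cases "\<omega> = 0")
  case False
  then have "gapmin f \<le> \<omega>" using Dset_ge[OF assms] by blast
  moreover have "0 < gapmin f" by (rule gapmin_pos[OF assms(1)])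
  ultimately show ?thesis by simp
qed simp

lemma Dset_fin: assumes tw: "is_twist f" shows "finite {\<omega>\<in>Dset f. \<omega> \<le> W}"
proof -
  define K' where "K' = tw_supp f - {lexp f}"
  have fin: "finite K'" using twist_fin[OF tw] by (simp add: K'_def)
  define B where "B = nat \<lceil>W / gapmin f\<rceil>"
  define F where "F m = (\<Sum>\<kappa>\<in>K'. real (m \<kappa>) * (lexp f - \<kappa>))" for m :: "real \<Rightarrow> nat"
  have "{\<omega>\<in>Dset f. \<omega> \<le> W} \<subseteq> F ` (K' \<rightarrow>\<^sub>E {..B})"
  proof
    fix \<omega> assume "\<omega> \<in> {\<omega>\<in>Dset f. \<omega> \<le> W}"
    then obtain n where n: "\<omega> = F n" and le: "\<omega> \<le> W" unfolding Dset_def F_def K'_def by blast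
    have nn: "\<forall>\<kappa>'\<in>K'. 0 \<le> real (n \<kappa>') * (lexp f - \<kappa>')"
    proof
      fix \<kappa>' assume "\<kappa>' \<in> K'"
      then have "0 < lexp f - \<kappa>'" unfolding K'_def by (rule gap_pos[OF tw])
      then show "0 \<le> real (n \<kappa>') * (lexp f - \<kappa>')" by simp
    qed
    have nb: "n \<kappa> \<le> B" if k: "\<kappa> \<in> K'" for \<kappa>
    proof -
      have g: "gapmin f \<le> lexp f - \<kappa>" using gapmin_le[OF tw] k by (simp add: K'_def)
      have gp: "0 < gapmin f" by (rule gapmin_pos[OF tw])
      have "real (n \<kappa>) * gapmin f \<le> real (n \<kappa>) * (lexp f - \<kappa>)" using g by (simp add: mult_left_mono)
      also have "\<dots> \<le> F n" unfolding F_def by (rule member_le_sum) (use fin k nn in auto)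
      also have "\<dots> \<le> W" using n le by simp
      finally have "real (n \<kappa>) \<le> W / gapmin f" using gp by (simp add: field_simps)
      then have "real (n \<kappa>) \<le> real (nat \<lceil>W / gapmin f\<rceil>)" by linarith
      then show ?thesis by (simp add: B_def)
    qed
    have "restrict n K' \<in> K' \<rightarrow>\<^sub>E {..B}" using nb by auto
    moreover have "F (restrict n K') = F n" unfolding F_def by (intro sum.cong) auto
    ultimately show "\<omega> \<in> F ` (K' \<rightarrow>\<^sub>E {..B})" using n by (intro image_eqI[where x="restrict n K'"]) simp_all
  qed
  moreover have "finite (F ` (K' \<rightarrow>\<^sub>E {..B}))" using fin by (intro finite_imageI finite_PiE) auto
  ultimately show ?thesis by (rule finite_subset)
qed

lemma tsys_inst: assumes "e > 0" shows "tsys (\<lambda>\<xi>. \<xi> powr (-1/e))"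
proof (unfold_locales)
  show "eventually (\<lambda>x. x powr (-1/e) > 0) at_top" using eventually_gt_at_top[of 0]
    by eventually_elim simp
  show "((\<lambda>x. x powr (-1/e)) \<longlongrightarrow> 0) at_top"
    by (rule tendsto_neg_powr[OF _ filterlim_ident]) (use assms in simp)
qed

lemma dsys_inst: assumes tw: "is_twist f" and e: "e > 0" shows "dsys (\<lambda>\<xi>. \<xi> powr (-1/e)) (Dset f) (gapmin f)"
proof -
  interpret tsys "\<lambda>\<xi>. \<xi> powr (-1/e)" by (rule tsys_inst[OF e])
  show ?thesis
  proof (unfold_locales)
    show "0 < gapmin f" by (rule gapmin_pos[OF tw])
    show "0 \<in> Dset f" by (rule Dset_0)
    show "finite {\<omega>\<in>Dset f. \<omega> \<le> W}" for W by (rule Dset_fin[OF tw])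
    show "x + y \<in> Dset f" if "x \<in> Dset f" "y \<in> Dset f" for x y using that by (rule Dset_add)
    show "gapmin f \<le> x" if "x \<in> Dset f" "x \<noteq> 0" for x using that by (rule Dset_ge[OF tw])
  qed
qed



lemma powr_T: "(\<xi>::real) > 0 \<Longrightarrow> \<xi> powr (- \<omega> / e) = (\<xi> powr (-1/e)) powr \<omega>"
  using powr_powr[of \<xi> "-1/e" \<omega>] by simp

lemma crit_unique:
  assumes tw: "is_twist f" and e: "d * lexp f - 1 > 0"
    and A1: "crit_expansion d q f A1" and A2: "crit_expansion d q f A2"
  shows "A1 = A2"
proof -
  define e where "e = d * lexp f - 1"
  define k0 where "k0 = lexp f"
  have epos: "e > 0" using e by (simp add: e_def)
  interpret dsys "\<lambda>\<xi>. \<xi> powr (-1/e)" "Dset f" "gapmin f" by (rule dsys_inst[OF tw epos])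
  from A1[unfolded crit_expansion_alt] obtain R1 x1 where
     D1: "\<forall>\<omega>. \<omega> \<notin> Dset f \<longrightarrow> A1 \<omega> = 0" and ev1: "\<forall>\<^sub>F \<xi> in at_top. 0 < x1 \<xi> \<and> R1 \<le> q * x1 \<xi> / \<xi> \<and>
               ((\<lambda>z. Phif d q f z \<xi>) has_real_derivative 0) (at (x1 \<xi>)) \<and>
               (\<forall>z>0. R1 \<le> q * z / \<xi> \<and> ((\<lambda>z. Phif d q f z \<xi>) has_real_derivative 0) (at z)
                      \<longrightarrow> z = x1 \<xi>)"
     and ex1: "\<forall>W. (\<lambda>\<xi>. Phif d q f (x1 \<xi>) \<xi> / (2 * pi) - \<xi> powr (k0 / e) *
        (\<Sum>\<omega>\<in>{\<omega>\<in>Dset f. \<omega> \<le> W}. A1 \<omega> * \<xi> powr (- \<omega> / e))) \<in> o(\<lambda>\<xi>. \<xi> powr ((k0 - W) / e))"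
    unfolding e_def k0_def by blast
  from A2[unfolded crit_expansion_alt] obtain R2 x2 where
     D2: "\<forall>\<omega>. \<omega> \<notin> Dset f \<longrightarrow> A2 \<omega> = 0" and ev2: "\<forall>\<^sub>F \<xi> in at_top. 0 < x2 \<xi> \<and> R2 \<le> q * x2 \<xi> / \<xi> \<and>
               ((\<lambda>z. Phif d q f z \<xi>) has_real_derivative 0) (at (x2 \<xi>)) \<and>
               (\<forall>z>0. R2 \<le> q * z / \<xi> \<and> ((\<lambda>z. Phif d q f z \<xi>) has_real_derivative 0) (at z)
                      \<longrightarrow> z = x2 \<xi>)"
     and ex2: "\<forall>W. (\<lambda>\<xi>. Phif d q f (x2 \<xi>) \<xi> / (2 * pi) - \<xi> powr (k0 / e) *
        (\<Sum>\<omega>\<in>{\<omega>\<in>Dset f. \<omega> \<le> W}. A2 \<omega> * \<xi> powr (- \<omega> / e))) \<in> o(\<lambda>\<xi>. \<xi> powr ((k0 - W) / e))"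
    unfolding e_def k0_def by blast
  have evx: "eventually (\<lambda>\<xi>. x1 \<xi> = x2 \<xi>) at_top"
    using ev1 ev2
  proof eventually_elim
    case (elim \<xi>)
    show ?case
    proof (cases "R1 \<le> R2")
      case True
      have U1: "\<And>z. 0 < z \<Longrightarrow> R1 \<le> q * z / \<xi> \<Longrightarrow> ((\<lambda>z. Phif d q f z \<xi>) has_real_derivative 0) (at z)
          \<Longrightarrow> z = x1 \<xi>" using elim(1) by blast
      have p2: "0 < x2 \<xi>" "R2 \<le> q * x2 \<xi> / \<xi>" "((\<lambda>z. Phif d q f z \<xi>) has_real_derivative 0) (at (x2 \<xi>))"
        using elim(2) by blast+
      have "R1 \<le> q * x2 \<xi> / \<xi>" using True p2(2) by linarith
      from U1[OF p2(1) this p2(3)] show ?thesis by simp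
    next
      case False
      have U2: "\<And>z. 0 < z \<Longrightarrow> R2 \<le> q * z / \<xi> \<Longrightarrow> ((\<lambda>z. Phif d q f z \<xi>) has_real_derivative 0) (at z)
          \<Longrightarrow> z = x2 \<xi>" using elim(2) by blast
      have p1: "0 < x1 \<xi>" "R1 \<le> q * x1 \<xi> / \<xi>" "((\<lambda>z. Phif d q f z \<xi>) has_real_derivative 0) (at (x1 \<xi>))"
        using elim(1) by blast+
      have "R2 \<le> q * x1 \<xi> / \<xi>" using False p1(2) by linarith
      from U2[OF p1(1) this p1(3)] show ?thesis by simp
    qed
  qed
  have main: "A1 \<omega> = A2 \<omega>" if om: "\<omega> \<in> Dset f" for \<omega>
  proof -
    define S where "S = {\<omega>'\<in>Dset f. \<omega>' \<le> \<omega>}"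
    have Sfin: "finite S" unfolding S_def by (rule Dset_fin[OF tw])
    define H1 where "H1 \<xi> = Phif d q f (x1 \<xi>) \<xi> / (2 * pi)" for \<xi>
    define H2 where "H2 \<xi> = Phif d q f (x2 \<xi>) \<xi> / (2 * pi)" for \<xi>
    define S1 where "S1 \<xi> = (\<Sum>\<omega>'\<in>S. A1 \<omega>' * \<xi> powr (- \<omega>' / e))" for \<xi>
    define S2 where "S2 \<xi> = (\<Sum>\<omega>'\<in>S. A2 \<omega>' * \<xi> powr (- \<omega>' / e))" for \<xi>
    have c1: "(\<lambda>\<xi>. H1 \<xi> - \<xi> powr (k0 / e) * S1 \<xi>) \<in> o(\<lambda>\<xi>. \<xi> powr ((k0 - \<omega>) / e))"
      using ex1 unfolding H1_def S1_def S_def by blast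
    have c2: "(\<lambda>\<xi>. H2 \<xi> - \<xi> powr (k0 / e) * S2 \<xi>) \<in> o(\<lambda>\<xi>. \<xi> powr ((k0 - \<omega>) / e))"
      using ex2 unfolding H2_def S2_def S_def by blast
    have "(\<lambda>\<xi>. (H1 \<xi> - \<xi> powr (k0 / e) * S1 \<xi>) - (H2 \<xi> - \<xi> powr (k0 / e) * S2 \<xi>))
        \<in> o(\<lambda>\<xi>. \<xi> powr ((k0 - \<omega>) / e))" by (rule sum_in_smallo(2)[OF c1 c2])
    then have L: "(\<lambda>\<xi>. ((H1 \<xi> - \<xi> powr (k0 / e) * S1 \<xi>) - (H2 \<xi> - \<xi> powr (k0 / e) * S2 \<xi>)) * \<xi> powr (- k0 / e))
        \<in> o(\<lambda>\<xi>. \<xi> powr ((k0 - \<omega>) / e) * \<xi> powr (- k0 / e))" by (rule landau_o.small.mult_right)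
    moreover have evA: "eventually (\<lambda>\<xi>. ((H1 \<xi> - \<xi> powr (k0 / e) * S1 \<xi>) - (H2 \<xi> - \<xi> powr (k0 / e) * S2 \<xi>)) * \<xi> powr (- k0 / e)
        = (\<Sum>\<omega>'\<in>S. (A2 \<omega>' - A1 \<omega>') * (\<xi> powr (-1/e)) powr \<omega>')) at_top"
      using evx eventually_gt_at_top[of 0]
    proof eventually_elim
      case (elim \<xi>)
      have h: "H1 \<xi> = H2 \<xi>" using elim by (simp add: H1_def H2_def)
      have p: "\<xi> powr (k0 / e) * \<xi> powr (- k0 / e) = 1" using elim by (simp add: powr_add[symmetric])
      have "((H1 \<xi> - \<xi> powr (k0 / e) * S1 \<xi>) - (H2 \<xi> - \<xi> powr (k0 / e) * S2 \<xi>)) * \<xi> powr (- k0 / e)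
          = (\<xi> powr (k0 / e) * \<xi> powr (- k0 / e)) * (S2 \<xi> - S1 \<xi>)" unfolding h by algebra
      also have "\<dots> = S2 \<xi> - S1 \<xi>" unfolding p by simp
      also have "\<dots> = (\<Sum>\<omega>'\<in>S. (A2 \<omega>' - A1 \<omega>') * (\<xi> powr (-1/e)) powr \<omega>')"
        unfolding S1_def S2_def using elim
        by (simp add: sum_subtractf[symmetric] left_diff_distrib powr_powr)
      finally show ?case .
    qed
    moreover have evB: "eventually (\<lambda>\<xi>. \<xi> powr ((k0 - \<omega>) / e) * \<xi> powr (- k0 / e) = (\<xi> powr (-1/e)) powr \<omega>) at_top"
      using eventually_gt_at_top[of 0]
    proof eventually_elim
      case (elim \<xi>)
      have "\<xi> powr ((k0 - \<omega>) / e) * \<xi> powr (- k0 / e) = \<xi> powr ((k0 - \<omega>) / e + - k0 / e)"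
        by (rule powr_add[symmetric])
      also have "(k0 - \<omega>) / e + - k0 / e = - \<omega> / e" using epos by (simp add: field_simps)
      finally show ?case using elim by (simp add: powr_powr)
    qed
    ultimately have "(\<lambda>\<xi>. \<Sum>\<omega>'\<in>S. (A2 \<omega>' - A1 \<omega>') * (\<xi> powr (-1/e)) powr \<omega>') \<in> o(\<lambda>\<xi>. (\<xi> powr (-1/e)) powr \<omega>)"
      using L by (simp only: landau_o.small.in_cong[OF evA] landau_o.small.cong[OF evB])
    moreover have "\<forall>\<omega>'\<in>S. \<omega>' \<le> \<omega>" by (simp add: S_def)
    ultimately have "\<forall>\<omega>'\<in>S. A2 \<omega>' - A1 \<omega>' = 0"
      by (rule uniq[OF Sfin, where c="\<lambda>\<omega>'. A2 \<omega>' - A1 \<omega>'"])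
    moreover have "\<omega> \<in> S" using om by (simp add: S_def)
    ultimately show ?thesis by simp
  qed
  show ?thesis
  proof
    fix \<omega> show "A1 \<omega> = A2 \<omega>" using main D1 D2 by (cases "\<omega> \<in> Dset f") auto
  qed
qed



locale twd =
  fixes d q :: real and f :: "real \<Rightarrow> real"
  assumes dpos: "d > 0" and qpos: "q > 0" and tw: "is_twist f"
    and big: "lexp f > 1/d" and lpos: "f (lexp f) > 0"
begin

definition "k0 = lexp f"
definition "e = d * k0 - 1"
definition "b0 = k0 - 1/d"
definition "a0 = f k0"
definition "cc = q powr (-1/d) / (2*pi*d)"

lemma finK: "finite (tw_supp f)" using tw by (simp add: is_twist_def)
lemma k0K: "k0 \<in> tw_supp f" unfolding k0_def by (rule lexp_in[OF tw])
lemma leK: "\<kappa> \<in> tw_supp f \<Longrightarrow> \<kappa> \<le> k0" unfolding k0_def by (rule lexp_ge[OF tw])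
lemma nnK: "\<kappa> \<in> tw_supp f \<Longrightarrow> 0 \<le> \<kappa>" by (rule supp_nn[OF tw])
lemma b0pos: "b0 > 0" using big by (simp add: b0_def k0_def)
lemma e_b0: "e = d * b0" using dpos by (simp add: e_def b0_def field_simps)
lemma epos: "e > 0" using e_b0 b0pos dpos by simp
lemma a0pos: "a0 > 0" using lpos by (simp add: a0_def k0_def)
lemma k0pos: "k0 > 0" using big dpos by (simp add: k0_def) (meson divide_pos_pos less_trans zero_less_one)
lemma ccpos: "cc > 0" using qpos dpos by (simp add: cc_def)
lemma b0_e: "b0 / e = 1 / d" using e_b0 b0pos dpos by simp

definition psi :: "real \<Rightarrow> real" where
  "psi u = (\<Sum>\<kappa>\<in>tw_supp f. f \<kappa> * \<kappa> * u powr (\<kappa> - 1/d))"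
definition dpsi :: "real \<Rightarrow> real" where
  "dpsi u = (\<Sum>\<kappa>\<in>tw_supp f. f \<kappa> * \<kappa> * (\<kappa> - 1/d) * u powr (\<kappa> - 1/d - 1))"
definition gg :: "real \<Rightarrow> real" where
  "gg u = (\<Sum>\<kappa>\<in>tw_supp f. f \<kappa> * \<kappa> * u powr (\<kappa> - k0))"
definition gd :: "real \<Rightarrow> real" where
  "gd u = (\<Sum>\<kappa>\<in>tw_supp f. f \<kappa> * \<kappa> * (\<kappa> - 1/d) * u powr (\<kappa> - k0))"

lemma psi_deriv: "u > 0 \<Longrightarrow> DERIV psi u :> dpsi u"
  unfolding psi_def[abs_def] dpsi_def
  by (auto intro!: derivative_eq_intros simp: algebra_simps)

lemma psi_cont: "u > 0 \<Longrightarrow> isCont psi u"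
  by (rule DERIV_isCont[OF psi_deriv])

lemma psi_eq: "u > 0 \<Longrightarrow> psi u = u powr b0 * gg u"
  unfolding psi_def gg_def sum_distrib_left
  by (intro sum.cong refl) (simp add: b0_def powr_add[symmetric] algebra_simps)

lemma dpsi_eq: "u > 0 \<Longrightarrow> dpsi u = u powr (b0 - 1) * gd u"
  unfolding dpsi_def gd_def sum_distrib_left
  by (intro sum.cong refl) (simp add: b0_def powr_add[symmetric] algebra_simps)

lemma lim_gen: "((\<lambda>u. \<Sum>\<kappa>\<in>tw_supp f. c \<kappa> * u powr (\<kappa> - k0)) \<longlongrightarrow> c k0) at_top"
proof -
  have "((\<lambda>u. \<Sum>\<kappa>\<in>tw_supp f. c \<kappa> * u powr (\<kappa> - k0)) \<longlongrightarrow> (\<Sum>\<kappa>\<in>tw_supp f. if \<kappa> = k0 then c \<kappa> else 0)) at_top"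
  proof (intro tendsto_sum)
    fix \<kappa> assume k: "\<kappa> \<in> tw_supp f"
    show "((\<lambda>u. c \<kappa> * u powr (\<kappa> - k0)) \<longlongrightarrow> (if \<kappa> = k0 then c \<kappa> else 0)) at_top"
    proof (cases "\<kappa> = k0")
      case True
      have ev: "eventually (\<lambda>u. c \<kappa> = c \<kappa> * u powr (\<kappa> - k0)) at_top"
        using eventually_gt_at_top[of 0] by eventually_elim (simp add: True)
      have "((\<lambda>u::real. c \<kappa>) \<longlongrightarrow> c \<kappa>) at_top" by simp
      then have "((\<lambda>u. c \<kappa> * u powr (\<kappa> - k0)) \<longlongrightarrow> c \<kappa>) at_top" using tendsto_cong[OF ev] by blast
      then show ?thesis using True by simp
    next
      case False
      then have "\<kappa> - k0 < 0" using leK[OF k] by simp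
      then have "((\<lambda>u. u powr (\<kappa> - k0)) \<longlongrightarrow> 0) at_top"
        by (intro tendsto_neg_powr filterlim_ident)
      then have "((\<lambda>u. c \<kappa> * u powr (\<kappa> - k0)) \<longlongrightarrow> c \<kappa> * 0) at_top" by (intro tendsto_mult tendsto_const)
      then show ?thesis using False by simp
    qed
  qed
  also have "(\<Sum>\<kappa>\<in>tw_supp f. if \<kappa> = k0 then c \<kappa> else 0) = c k0" using finK k0K by (simp add: sum.delta)
  finally show ?thesis .
qed

lemma gg_lim: "(gg \<longlongrightarrow> a0 * k0) at_top"
  using lim_gen[of "\<lambda>\<kappa>. f \<kappa> * \<kappa>"] unfolding gg_def[abs_def] by (simp add: a0_def)

lemma gd_lim: "(gd \<longlongrightarrow> a0 * k0 * b0) at_top"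
  using lim_gen[of "\<lambda>\<kappa>. f \<kappa> * \<kappa> * (\<kappa> - 1/d)"] unfolding gd_def[abs_def] by (simp add: a0_def b0_def)

definition "R0 = (SOME R. R \<ge> 1 \<and> (\<forall>u\<ge>R. gd u > 0 \<and> gg u > a0 * k0 / 2 \<and> gg u < 2 * a0 * k0))"

lemma R0: "R0 \<ge> 1" "\<And>u. u \<ge> R0 \<Longrightarrow> gd u > 0 \<and> gg u > a0 * k0 / 2 \<and> gg u < 2 * a0 * k0"
proof -
  have p: "a0 * k0 > 0" using a0pos k0pos by simp
  have "0 < a0 * k0 * b0" using p b0pos by simp
  from order_tendstoD(1)[OF gd_lim this] have "eventually (\<lambda>u. gd u > 0) at_top" .
  moreover have "a0 * k0 / 2 < a0 * k0" using p by simp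
  from order_tendstoD(1)[OF gg_lim this] have "eventually (\<lambda>u. gg u > a0 * k0 / 2) at_top" .
  moreover have "a0 * k0 < 2 * a0 * k0" using p by simp
  from order_tendstoD(2)[OF gg_lim this] have "eventually (\<lambda>u. gg u < 2 * a0 * k0) at_top" .
  ultimately have "eventually (\<lambda>u. gd u > 0 \<and> gg u > a0 * k0 / 2 \<and> gg u < 2 * a0 * k0) at_top"
    by eventually_elim blast
  then obtain R where R: "\<forall>u\<ge>R. gd u > 0 \<and> gg u > a0 * k0 / 2 \<and> gg u < 2 * a0 * k0"
    by (auto simp: eventually_at_top_linorder)
  then have "\<exists>R. R \<ge> 1 \<and> (\<forall>u\<ge>R. gd u > 0 \<and> gg u > a0 * k0 / 2 \<and> gg u < 2 * a0 * k0)"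
    by (intro exI[of _ "max R 1"]) auto
  from someI_ex[OF this] show "R0 \<ge> 1" "\<And>u. u \<ge> R0 \<Longrightarrow> gd u > 0 \<and> gg u > a0 * k0 / 2 \<and> gg u < 2 * a0 * k0"
    unfolding R0_def by blast+
qed

lemma psi_mono: assumes "R0 \<le> u" "u < w" shows "psi u < psi w"
proof (rule DERIV_pos_imp_increasing[OF assms(2)])
  fix x assume x: "u \<le> x" "x \<le> w"
  then have xR: "x \<ge> R0" using assms by simp
  then have xp: "x > 0" using R0(1) by simp
  have "dpsi x > 0" using dpsi_eq[OF xp] R0(2)[OF xR] xp by simp
  then show "\<exists>y. DERIV psi x :> y \<and> y > 0" using psi_deriv[OF xp] by blast
qed

lemma psi_bounds: assumes "R0 \<le> u"
  shows "a0 * k0 / 2 * u powr b0 \<le> psi u" "psi u \<le> 2 * a0 * k0 * u powr b0"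
proof -
  have up: "u > 0" using assms R0(1) by simp
  have g: "gg u > a0 * k0 / 2" "gg u < 2 * a0 * k0" using R0(2)[OF assms] by blast+
  have pp: "u powr b0 > 0" using up by simp
  have pe: "psi u = gg u * u powr b0" using psi_eq[OF up] by simp
  have "a0 * k0 / 2 * u powr b0 \<le> gg u * u powr b0" using g(1) pp by (intro mult_right_mono) auto
  then show "a0 * k0 / 2 * u powr b0 \<le> psi u" by (simp only: pe)
  have "gg u * u powr b0 \<le> 2 * a0 * k0 * u powr b0" using g(2) pp by (intro mult_right_mono) auto
  then show "psi u \<le> 2 * a0 * k0 * u powr b0" by (simp only: pe)
qed

lemma root_exists: assumes y: "psi R0 \<le> y" shows "\<exists>u. R0 \<le> u \<and> psi u = y"
proof -
  have p: "a0 * k0 > 0" using a0pos k0pos by simp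
  have "0 < a0 * k0 / 2 * R0 powr b0" using p R0(1) by simp
  moreover have "a0 * k0 / 2 * R0 powr b0 \<le> psi R0" by (rule psi_bounds(1)) simp
  ultimately have y0: "y > 0" using y by linarith
  define U where "U = max R0 ((2 * y / (a0 * k0)) powr (1 / b0))"
  have UR: "R0 \<le> U" by (simp add: U_def)
  have "(2 * y / (a0 * k0)) powr (1 / b0) \<le> U" by (simp add: U_def)
  then have "((2 * y / (a0 * k0)) powr (1 / b0)) powr b0 \<le> U powr b0"
    using b0pos by (intro powr_mono2) auto
  also have "((2 * y / (a0 * k0)) powr (1 / b0)) powr b0 = 2 * y / (a0 * k0)"
    using b0pos y0 p by (simp add: powr_powr)
  finally have "a0 * k0 / 2 * (2 * y / (a0 * k0)) \<le> a0 * k0 / 2 * U powr b0"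
    using p by (intro mult_left_mono) auto
  moreover have "a0 * k0 / 2 * (2 * y / (a0 * k0)) = y" using a0pos k0pos by (simp add: field_simps)
  ultimately have "y \<le> a0 * k0 / 2 * U powr b0" by simp
  also have "\<dots> \<le> psi U" by (rule psi_bounds(1)[OF UR])
  finally have yU: "y \<le> psi U" .
  have "\<exists>u. R0 \<le> u \<and> u \<le> U \<and> psi u = y"
    by (rule IVT[OF y yU UR]) (use R0(1) in \<open>auto intro!: psi_cont\<close>)
  then show ?thesis by blast
qed

lemma root_unique: "R0 \<le> u \<Longrightarrow> R0 \<le> w \<Longrightarrow> psi u = psi w \<Longrightarrow> u = w"
  using psi_mono[of u w] psi_mono[of w u] by (cases u w rule: linorder_cases) auto

end


lemma powr_at_top: assumes p: "(p::real) > 0" shows "filterlim (\<lambda>x. x powr p) at_top at_top"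
  unfolding filterlim_at_top_ge[where c=1]
proof (intro allI impI)
  fix Z :: real assume Z: "Z \<ge> 1"
  show "eventually (\<lambda>x. Z \<le> x powr p) at_top"
    using eventually_ge_at_top[of "Z powr (1/p)"]
  proof eventually_elim
    case (elim x)
    have "Z = (Z powr (1/p)) powr p" using Z p by (simp add: powr_powr)
    also have "\<dots> \<le> x powr p" using elim p Z by (intro powr_mono2) auto
    finally show ?case .
  qed
qed

context twd begin

definition rho :: "real \<Rightarrow> real" where "rho \<xi> = cc * \<xi> powr (1/d)"

lemma rho_at_top: "filterlim rho at_top at_top"
  unfolding rho_def[abs_def]
  by (rule filterlim_tendsto_pos_mult_at_top[OF tendsto_const ccpos powr_at_top]) (use dpos in simp)

definition Dexp :: "real \<Rightarrow> real \<Rightarrow> real" where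
  "Dexp z \<xi> = z powr (1/d - 1) / d - 2 * pi * (\<Sum>\<kappa>\<in>tw_supp f. f \<kappa> * (\<kappa> * (q * z / \<xi>) powr (\<kappa> - 1) * (q / \<xi>)))"

lemma Phi_deriv: assumes z: "z > 0" and xi: "\<xi> > 0"
  shows "((\<lambda>z. Phif d q f z \<xi>) has_real_derivative Dexp z \<xi>) (at z)"
proof -
  have u: "q * z / \<xi> > 0" using z xi qpos by simp
  have "((\<lambda>z. z powr (1/d) - 2 * pi * (\<Sum>\<kappa>\<in>tw_supp f. f \<kappa> * (q * z / \<xi>) powr \<kappa>)) has_real_derivative
      Dexp z \<xi>) (at z)"
    unfolding Dexp_def using z u by (intro derivative_eq_intros refl) (auto simp: field_simps)
  then show ?thesis by (simp add: Phif_def[abs_def] tw_eval_def)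
qed

lemma Dexp_eq: assumes z: "z > 0" and xi: "\<xi> > 0"
  shows "Dexp z \<xi> = (q * z / \<xi>) powr (1/d - 1) * (2 * pi * (q / \<xi>)) * (rho \<xi> - psi (q * z / \<xi>))"
proof -
  define u where "u = q * z / \<xi>"
  have up: "u > 0" using z xi qpos by (simp add: u_def)
  have zu: "z = u * (\<xi> / q)" using qpos xi by (simp add: u_def field_simps)
  have a: "z powr (1/d - 1) = u powr (1/d - 1) * (\<xi> / q) powr (1/d - 1)"
    unfolding zu using up xi qpos by (intro powr_mult)
  have b: "(\<xi> / q) powr (1/d - 1) / d = 2 * pi * (q / \<xi>) * rho \<xi>"
  proof -
    have "(\<xi> / q) powr (1/d - 1) = (\<xi> / q) powr (1/d + -1)" by simp
    also have "\<dots> = (\<xi> / q) powr (1/d) * (\<xi> / q) powr (-1)" by (rule powr_add)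
    also have "(\<xi> / q) powr (-1) = q / \<xi>" using xi qpos by (simp add: powr_minus)
    also have "(\<xi> / q) powr (1/d) = \<xi> powr (1/d) * q powr (-1/d)"
    proof -
      have "(\<xi> / q) powr (1/d) = \<xi> powr (1/d) / q powr (1/d)" using xi qpos by (simp add: powr_divide)
      also have "\<dots> = \<xi> powr (1/d) * q powr (-1/d)" by (simp add: powr_minus divide_inverse)
      finally show ?thesis .
    qed
    finally show ?thesis using dpos by (simp add: rho_def cc_def field_simps)
  qed
  have c: "(\<Sum>\<kappa>\<in>tw_supp f. f \<kappa> * (\<kappa> * u powr (\<kappa> - 1) * (q / \<xi>))) = (q / \<xi>) * u powr (1/d - 1) * psi u"
    unfolding psi_def sum_distrib_left
    by (intro sum.cong refl) (simp add: powr_add[symmetric] algebra_simps)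
  have "Dexp z \<xi> = u powr (1/d - 1) * ((\<xi> / q) powr (1/d - 1) / d) - 2 * pi * ((q / \<xi>) * u powr (1/d - 1) * psi u)"
    unfolding Dexp_def u_def[symmetric] a c by simp
  also have "\<dots> = u powr (1/d - 1) * (2 * pi * (q / \<xi>)) * (rho \<xi> - psi u)"
    unfolding b by (simp add: algebra_simps diff_divide_distrib)
  finally show ?thesis by (simp add: u_def)
qed

lemma crit_iff: assumes z: "z > 0" and xi: "\<xi> > 0"
  shows "((\<lambda>z. Phif d q f z \<xi>) has_real_derivative 0) (at z) \<longleftrightarrow> psi (q * z / \<xi>) = rho \<xi>"
proof -
  have pos: "(q * z / \<xi>) powr (1/d - 1) * (2 * pi * (q / \<xi>)) > 0" using z xi qpos by simp
  have "Dexp z \<xi> = 0 \<longleftrightarrow> psi (q * z / \<xi>) = rho \<xi>"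
    unfolding Dexp_eq[OF z xi] using pos by auto
  moreover have "((\<lambda>z. Phif d q f z \<xi>) has_real_derivative 0) (at z) \<longleftrightarrow> Dexp z \<xi> = 0"
  proof
    assume "((\<lambda>z. Phif d q f z \<xi>) has_real_derivative 0) (at z)"
    then show "Dexp z \<xi> = 0" using DERIV_unique[OF Phi_deriv[OF z xi]] by blast
  next
    assume "Dexp z \<xi> = 0"
    then show "((\<lambda>z. Phif d q f z \<xi>) has_real_derivative 0) (at z)" using Phi_deriv[OF z xi] by simp
  qed
  ultimately show ?thesis by simp
qed

definition uu :: "real \<Rightarrow> real" where "uu \<xi> = (THE u. R0 \<le> u \<and> psi u = rho \<xi>)"

lemma ev_big: "eventually (\<lambda>\<xi>. \<xi> > 0 \<and> psi R0 \<le> rho \<xi>) at_top"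
proof -
  have "eventually (\<lambda>\<xi>. psi R0 \<le> rho \<xi>) at_top" using rho_at_top by (simp add: filterlim_at_top)
  then show ?thesis using eventually_gt_at_top[of 0] by eventually_elim simp
qed

lemma uu_props: assumes "psi R0 \<le> rho \<xi>"
  shows "R0 \<le> uu \<xi>" "psi (uu \<xi>) = rho \<xi>" "\<And>u. R0 \<le> u \<Longrightarrow> psi u = rho \<xi> \<Longrightarrow> u = uu \<xi>"
proof -
  have ex: "\<exists>!u. R0 \<le> u \<and> psi u = rho \<xi>"
  proof -
    obtain u where u: "R0 \<le> u" "psi u = rho \<xi>" using root_exists[OF assms] by blast
    show ?thesis
    proof (rule ex1I[of _ u])
      show "R0 \<le> u \<and> psi u = rho \<xi>" using u by simp
      fix w assume "R0 \<le> w \<and> psi w = rho \<xi>"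
      then show "w = u" using root_unique[of w u] u by simp
    qed
  qed
  from theI'[OF ex] show "R0 \<le> uu \<xi>" "psi (uu \<xi>) = rho \<xi>" unfolding uu_def by blast+
  fix u assume "R0 \<le> u" "psi u = rho \<xi>"
  then have "(THE u. R0 \<le> u \<and> psi u = rho \<xi>) = u" by (intro the1_equality[OF ex]) simp
  then show "u = uu \<xi>" by (simp add: uu_def)
qed

lemma uu_at_top: "filterlim uu at_top at_top"
  unfolding filterlim_at_top_ge[where c=1]
proof (intro allI impI)
  fix Z :: real assume Z: "Z \<ge> 1"
  have p: "a0 * k0 > 0" using a0pos k0pos by simp
  have "eventually (\<lambda>\<xi>. 2 * a0 * k0 * (max Z R0) powr b0 < rho \<xi>) at_top"
    using rho_at_top by (simp add: filterlim_at_top_dense)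
  then show "eventually (\<lambda>\<xi>. Z \<le> uu \<xi>) at_top" using ev_big
  proof eventually_elim
    case (elim \<xi>)
    note U = uu_props[OF elim(2)[THEN conjunct2]]
    show ?case
    proof (rule ccontr)
      assume "\<not> Z \<le> uu \<xi>"
      then have "uu \<xi> < max Z R0" by simp
      then have "uu \<xi> powr b0 \<le> (max Z R0) powr b0" using U(1) R0(1) b0pos by (intro powr_mono2) auto
      then have "2 * a0 * k0 * uu \<xi> powr b0 \<le> 2 * a0 * k0 * (max Z R0) powr b0" using p by (intro mult_left_mono) auto
      moreover have "psi (uu \<xi>) \<le> 2 * a0 * k0 * uu \<xi> powr b0" by (rule psi_bounds(2)[OF U(1)])
      ultimately show False using U(2) elim(1) by simp
    qed
  qed
qed

end


context twd begin

definition TT :: "real \<Rightarrow> real" where "TT \<xi> = \<xi> powr (-1/e)"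

lemma dsys_TT: "dsys TT (Dset f) (gapmin f)"
proof -
  have "TT = (\<lambda>\<xi>. \<xi> powr (-1/e))" by (simp add: TT_def fun_eq_iff)
  then show ?thesis using dsys_inst[OF tw epos] by simp
qed

end

sublocale twd \<subseteq> D: dsys TT "Dset f" "gapmin f" by (rule dsys_TT)

context twd begin

definition v :: "real \<Rightarrow> real" where "v \<xi> = uu \<xi> * TT \<xi>"
definition "v0 = (cc / (a0 * k0)) powr (1 / b0)"

lemma v0pos: "v0 > 0" using ccpos a0pos k0pos by (simp add: v0_def)

lemma ev_uu: "eventually (\<lambda>\<xi>. \<xi> > 0 \<and> R0 \<le> uu \<xi> \<and> psi (uu \<xi>) = rho \<xi> \<and>
    (\<forall>u. R0 \<le> u \<and> psi u = rho \<xi> \<longrightarrow> u = uu \<xi>)) at_top"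
  using ev_big by eventually_elim (use uu_props in blast)

lemma TT_pos: "\<xi> > 0 \<Longrightarrow> TT \<xi> > 0" by (simp add: TT_def)

lemma TT_b0: "\<xi> > 0 \<Longrightarrow> TT \<xi> powr b0 = \<xi> powr (-1/d)"
proof -
  assume xi: "\<xi> > 0"
  have "TT \<xi> powr b0 = \<xi> powr (-1/e * b0)" by (simp add: TT_def powr_powr)
  also have "-1/e * b0 = -(b0/e)" by simp
  also have "\<dots> = -1/d" using b0_e by simp
  finally show ?thesis .
qed

lemma ev_v: "eventually (\<lambda>\<xi>. v \<xi> > 0 \<and> v \<xi> powr b0 = cc / gg (uu \<xi>)) at_top"
  using ev_uu
proof eventually_elim
  case (elim \<xi>)
  define u where "u = uu \<xi>"
  have xi: "\<xi> > 0" and uR: "R0 \<le> u" and pu: "psi u = rho \<xi>" using elim by (auto simp: u_def)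
  have up: "u > 0" using uR R0(1) by simp
  have "a0 * k0 / 2 > 0" using a0pos k0pos by simp
  then have ggp: "gg u > 0" using R0(2)[OF uR] by linarith
  have vpos: "v \<xi> > 0" using up TT_pos[OF xi] by (simp add: v_def u_def)
  have "v \<xi> powr b0 = u powr b0 * TT \<xi> powr b0" unfolding v_def u_def[symmetric]
    using up TT_pos[OF xi] by (simp add: powr_mult)
  also have "\<dots> = u powr b0 * \<xi> powr (-1/d)" by (simp add: TT_b0[OF xi])
  also have "u powr b0 = rho \<xi> / gg u" using psi_eq[OF up] pu ggp by (simp add: field_simps)
  also have "rho \<xi> / gg u * \<xi> powr (-1/d) = cc * (\<xi> powr (1/d) * \<xi> powr (-1/d)) / gg u"
    by (simp add: rho_def)
  also have "\<xi> powr (1/d) * \<xi> powr (-1/d) = 1" using xi by (simp add: powr_add[symmetric])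
  finally show ?case using vpos by (simp add: u_def)
qed

lemma gguu_lim: "((\<lambda>\<xi>. gg (uu \<xi>)) \<longlongrightarrow> a0 * k0) at_top"
  by (rule filterlim_compose[OF gg_lim uu_at_top])

lemma vb0_lim: "((\<lambda>\<xi>. v \<xi> powr b0) \<longlongrightarrow> cc / (a0 * k0)) at_top"
proof -
  have "((\<lambda>\<xi>. cc / gg (uu \<xi>)) \<longlongrightarrow> cc / (a0 * k0)) at_top"
    using a0pos k0pos by (intro tendsto_divide tendsto_const gguu_lim) auto
  moreover have ev: "eventually (\<lambda>\<xi>. cc / gg (uu \<xi>) = v \<xi> powr b0) at_top"
    using ev_v by eventually_elim simp
  ultimately show ?thesis using tendsto_cong[OF ev] by blast
qed

lemma v_lim: "(v \<longlongrightarrow> v0) at_top"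
proof -
  have "((\<lambda>\<xi>. (v \<xi> powr b0) powr (1 / b0)) \<longlongrightarrow> (cc / (a0 * k0)) powr (1 / b0)) at_top"
    using ccpos a0pos k0pos by (intro tendsto_powr vb0_lim tendsto_const) auto
  moreover have ev: "eventually (\<lambda>\<xi>. (v \<xi> powr b0) powr (1 / b0) = v \<xi>) at_top"
    using ev_v
  proof eventually_elim
    case (elim \<xi>)
    have "(v \<xi> powr b0) powr (1 / b0) = v \<xi> powr (b0 * (1 / b0))" by (rule powr_powr)
    also have "b0 * (1 / b0) = 1" using b0pos by simp
    finally show ?case using elim by simp
  qed
  ultimately show ?thesis using tendsto_cong[OF ev] by (simp add: v0_def)
qed

lemma vpow_lim: "((\<lambda>\<xi>. v \<xi> powr a) \<longlongrightarrow> v0 powr a) at_top"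
  using v0pos by (intro tendsto_powr v_lim tendsto_const) auto

definition Rr :: "real \<Rightarrow> real" where
  "Rr \<xi> = (\<Sum>\<kappa>\<in>tw_supp f - {k0}. f \<kappa> * \<kappa> * (TT \<xi> powr (k0 - \<kappa>) * v \<xi> powr (\<kappa> - 1/d)))"

lemma ev_ident: "eventually (\<lambda>\<xi>. a0 * k0 * v \<xi> powr b0 + Rr \<xi> = cc) at_top"
  using ev_uu ev_v
proof eventually_elim
  case (elim \<xi>)
  define u where "u = uu \<xi>"
  have xi: "\<xi> > 0" and uR: "R0 \<le> u" and pu: "psi u = rho \<xi>" using elim by (auto simp: u_def)
  have up: "u > 0" using uR R0(1) by simp
  have Tp: "TT \<xi> > 0" by (rule TT_pos[OF xi])
  have vp: "v \<xi> > 0" using elim by simp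
  have uv: "u = v \<xi> / TT \<xi>" using Tp by (simp add: v_def u_def)
  have Tb: "TT \<xi> powr (- b0) = \<xi> powr (1/d)"
    using TT_b0[OF xi] Tp xi by (simp add: powr_minus)
  have tm: "u powr (\<kappa> - 1/d) = \<xi> powr (1/d) * (TT \<xi> powr (k0 - \<kappa>) * v \<xi> powr (\<kappa> - 1/d))" for \<kappa>
  proof -
    have "u powr (\<kappa> - 1/d) = v \<xi> powr (\<kappa> - 1/d) / TT \<xi> powr (\<kappa> - 1/d)"
      unfolding uv using vp Tp by (simp add: powr_divide)
    also have "1 / TT \<xi> powr (\<kappa> - 1/d) = TT \<xi> powr (k0 - \<kappa>) * TT \<xi> powr (- b0)"
    proof -
      have "TT \<xi> powr (k0 - \<kappa>) * TT \<xi> powr (- b0) = TT \<xi> powr ((k0 - \<kappa>) + (- b0))"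
        by (rule powr_add[symmetric])
      also have "(k0 - \<kappa>) + (- b0) = - (\<kappa> - 1/d)" by (simp add: b0_def)
      also have "TT \<xi> powr (- (\<kappa> - 1/d)) = 1 / TT \<xi> powr (\<kappa> - 1/d)"
        unfolding powr_minus by (simp add: divide_inverse)
      finally show ?thesis by simp
    qed
    then have "v \<xi> powr (\<kappa> - 1/d) / TT \<xi> powr (\<kappa> - 1/d) = v \<xi> powr (\<kappa> - 1/d) * (TT \<xi> powr (k0 - \<kappa>) * TT \<xi> powr (- b0))"
      by (metis times_divide_eq_right mult_1_right)
    finally show ?thesis unfolding Tb by (simp add: algebra_simps)
  qed
  have "psi u = \<xi> powr (1/d) * (\<Sum>\<kappa>\<in>tw_supp f. f \<kappa> * \<kappa> * (TT \<xi> powr (k0 - \<kappa>) * v \<xi> powr (\<kappa> - 1/d)))"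
    unfolding psi_def sum_distrib_left tm by (intro sum.cong refl) (simp add: algebra_simps)
  also have "(\<Sum>\<kappa>\<in>tw_supp f. f \<kappa> * \<kappa> * (TT \<xi> powr (k0 - \<kappa>) * v \<xi> powr (\<kappa> - 1/d)))
      = f k0 * k0 * (TT \<xi> powr (k0 - k0) * v \<xi> powr (k0 - 1/d)) + Rr \<xi>"
    unfolding Rr_def using finK k0K by (simp add: sum.remove)
  also have "f k0 * k0 * (TT \<xi> powr (k0 - k0) * v \<xi> powr (k0 - 1/d)) = a0 * k0 * v \<xi> powr b0"
    using Tp by (simp add: a0_def b0_def)
  finally have "cc * \<xi> powr (1/d) = \<xi> powr (1/d) * (a0 * k0 * v \<xi> powr b0 + Rr \<xi>)"
    using pu by (simp add: rho_def)
  then show ?case using xi by simp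
qed

lemma Rr_lim: "(Rr \<longlongrightarrow> 0) at_top"
proof -
  have "(Rr \<longlongrightarrow> (\<Sum>\<kappa>\<in>tw_supp f - {k0}. f \<kappa> * \<kappa> * (0 * v0 powr (\<kappa> - 1/d)))) at_top"
    unfolding Rr_def[abs_def]
  proof (intro tendsto_sum tendsto_mult tendsto_const vpow_lim)
    fix \<kappa> assume "\<kappa> \<in> tw_supp f - {k0}"
    then have "k0 - \<kappa> > 0" using leK[of \<kappa>] by auto
    then show "((\<lambda>\<xi>. TT \<xi> powr (k0 - \<kappa>)) \<longlongrightarrow> 0) at_top" by (rule D.powr_tendsto0)
  qed
  then show ?thesis by simp
qed

end


context twd begin

lemma gapD: "\<kappa> \<in> tw_supp f - {k0} \<Longrightarrow> k0 - \<kappa> \<in> Dset f"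
  unfolding k0_def using Dset_gap finK by blast

lemma gapD': "\<kappa> \<in> tw_supp f \<Longrightarrow> k0 - \<kappa> \<in> Dset f"
  using gapD[of \<kappa>] Dset_0[of f] by (cases "\<kappa> = k0") auto

lemma Exp_v_all: "D.Exp N (\<lambda>\<xi>. v \<xi> powr a)"
proof (induction N arbitrary: a)
  case 0
  have "((\<lambda>\<xi>. v \<xi> powr a / 1) \<longlongrightarrow> v0 powr a) at_top" using vpow_lim by simp
  then have "(\<lambda>\<xi>. v \<xi> powr a) \<in> O(\<lambda>_. 1)" by (rule bigoI_tendsto) simp
  then show ?case by (rule D.Exp0)
next
  case (Suc N)
  have RrE: "D.Exp (Suc N) Rr"
    unfolding Rr_def[abs_def]
  proof (intro D.Exp_sum)
    fix \<kappa> assume k: "\<kappa> \<in> tw_supp f - {k0}"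
    have "D.Exp (Suc N) (\<lambda>\<xi>. TT \<xi> powr (k0 - \<kappa>) * v \<xi> powr (\<kappa> - 1/d))"
      by (rule D.Exp_monom_Suc[OF gapD[OF k] _ Suc.IH]) (use k in auto)
    then show "D.Exp (Suc N) (\<lambda>\<xi>. f \<kappa> * \<kappa> * (TT \<xi> powr (k0 - \<kappa>) * v \<xi> powr (\<kappa> - 1/d)))"
      by (rule D.Exp_cmult)
  qed (simp add: finK)
  define y where "y \<xi> = (-1 / cc) * Rr \<xi>" for \<xi>
  have yE: "D.Exp (Suc N) y" unfolding y_def by (rule D.Exp_cmult[OF RrE])
  have ylim: "(y \<longlongrightarrow> 0) at_top" unfolding y_def[abs_def] using tendsto_mult[OF tendsto_const Rr_lim, of "-1/cc"] by simp
  have E1: "D.Exp (Suc N) (\<lambda>\<xi>. (1 + y \<xi>) powr (1 / b0))" by (rule D.Exp_comp[OF _ yE ylim]) simp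
  have E2: "D.Exp (Suc N) (\<lambda>\<xi>. v0 * (1 + y \<xi>) powr (1 / b0))" by (rule D.Exp_cmult[OF E1])
  have ev: "eventually (\<lambda>\<xi>. v0 * (1 + y \<xi>) powr (1 / b0) = v \<xi>) at_top"
    using ev_ident ev_v
  proof eventually_elim
    case (elim \<xi>)
    have vp: "v \<xi> > 0" using elim by simp
    have p: "a0 * k0 > 0" using a0pos k0pos by simp
    have "v \<xi> powr b0 = (cc - Rr \<xi>) / (a0 * k0)" using elim(1) a0pos k0pos by (simp add: field_simps)
    also have "(cc - Rr \<xi>) / (a0 * k0) = (cc / (a0 * k0)) * (1 + y \<xi>)"
      using ccpos a0pos k0pos by (simp add: y_def field_simps)
    finally have vb: "v \<xi> powr b0 = (cc / (a0 * k0)) * (1 + y \<xi>)" .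
    have yp: "1 + y \<xi> > 0"
    proof -
      have "(cc / (a0 * k0)) * (1 + y \<xi>) > 0" using vb vp by (metis powr_gt_zero less_irrefl)
      moreover have "cc / (a0 * k0) > 0" using p ccpos by simp
      ultimately show ?thesis by (rule zero_less_mult_pos)
    qed
    have "v \<xi> = (v \<xi> powr b0) powr (1 / b0)" using vp b0pos by (simp add: powr_powr)
    also have "\<dots> = (cc / (a0 * k0)) powr (1 / b0) * (1 + y \<xi>) powr (1 / b0)"
      unfolding vb using yp p ccpos by (intro powr_mult)
    finally show ?case by (simp add: v0_def)
  qed
  have vE: "D.Exp (Suc N) v" using D.Exp_cong[OF E2 ev] by simp
  show ?case
  proof -
    define h where "h \<xi> = (1 / v0) * (v \<xi> - v0)" for \<xi>
    have hE: "D.Exp (Suc N) h" unfolding h_def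
      by (intro D.Exp_cmult D.Exp_diff vE D.Exp_const)
    have hlim: "(h \<longlongrightarrow> 0) at_top" unfolding h_def[abs_def]
      using tendsto_mult[OF tendsto_const tendsto_diff[OF v_lim tendsto_const[of v0]], of "1/v0"] by simp
    have F1: "D.Exp (Suc N) (\<lambda>\<xi>. (1 + h \<xi>) powr a)" by (rule D.Exp_comp[OF _ hE hlim]) simp
    have F2: "D.Exp (Suc N) (\<lambda>\<xi>. v0 powr a * (1 + h \<xi>) powr a)" by (rule D.Exp_cmult[OF F1])
    have ev2: "eventually (\<lambda>\<xi>. v0 powr a * (1 + h \<xi>) powr a = v \<xi> powr a) at_top"
      using ev_v
    proof eventually_elim
      case (elim \<xi>)
      have "1 + h \<xi> = v \<xi> / v0" using v0pos by (simp add: h_def field_simps)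
      then have "(1 + h \<xi>) powr a = v \<xi> powr a / v0 powr a" using elim v0pos by (simp add: powr_divide)
      then show ?case using v0pos by simp
    qed
    show ?thesis by (rule D.Exp_cong[OF F2 ev2])
  qed
qed

definition G :: "real \<Rightarrow> real" where
  "G \<xi> = (1 / (2 * pi * q powr (1/d))) * v \<xi> powr (1/d) - (\<Sum>\<kappa>\<in>tw_supp f. f \<kappa> * (TT \<xi> powr (k0 - \<kappa>) * v \<xi> powr \<kappa>))"

lemma Exp_G: "D.Exp N G"
proof -
  have 1: "D.Exp N (\<lambda>\<xi>. (1 / (2 * pi * q powr (1/d))) * v \<xi> powr (1/d))"
    by (rule D.Exp_cmult[OF Exp_v_all])
  have 2: "D.Exp N (\<lambda>\<xi>. \<Sum>\<kappa>\<in>tw_supp f. f \<kappa> * (TT \<xi> powr (k0 - \<kappa>) * v \<xi> powr \<kappa>))"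
  proof (rule D.Exp_sum)
    show "finite (tw_supp f)" by (rule finK)
    fix \<kappa> assume k: "\<kappa> \<in> tw_supp f"
    show "D.Exp N (\<lambda>\<xi>. f \<kappa> * (TT \<xi> powr (k0 - \<kappa>) * v \<xi> powr \<kappa>))"
      by (rule D.Exp_cmult[OF D.Exp_monom[OF gapD'[OF k] Exp_v_all]])
  qed
  from D.Exp_diff[OF 1 2] show ?thesis unfolding G_def[abs_def] .
qed

definition "A00 = (1 / (2 * pi * q powr (1/d))) * v0 powr (1/d) - a0 * v0 powr k0"

lemma G_lim: "(G \<longlongrightarrow> A00) at_top"
proof -
  have lim_term: "((\<lambda>\<xi>. f \<kappa> * (TT \<xi> powr (k0 - \<kappa>) * v \<xi> powr \<kappa>)) \<longlongrightarrow> (if \<kappa> = k0 then f k0 * v0 powr k0 else 0)) at_top"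
    if k: "\<kappa> \<in> tw_supp f" for \<kappa>
  proof (cases "\<kappa> = k0")
    case True
    have ev: "eventually (\<lambda>\<xi>. f \<kappa> * v \<xi> powr \<kappa> = f \<kappa> * (TT \<xi> powr (k0 - \<kappa>) * v \<xi> powr \<kappa>)) at_top"
      using eventually_gt_at_top[of 0] by eventually_elim (use TT_pos in \<open>simp add: True less_imp_neq[symmetric]\<close>)
    have "((\<lambda>\<xi>. f \<kappa> * v \<xi> powr \<kappa>) \<longlongrightarrow> f \<kappa> * v0 powr \<kappa>) at_top"
      by (intro tendsto_mult tendsto_const vpow_lim)
    then show ?thesis using tendsto_cong[OF ev] True by simp
  next
    case False
    then have "k0 - \<kappa> > 0" using leK[OF k] by simp
    then have "((\<lambda>\<xi>. f \<kappa> * (TT \<xi> powr (k0 - \<kappa>) * v \<xi> powr \<kappa>)) \<longlongrightarrow> f \<kappa> * (0 * v0 powr \<kappa>)) at_top"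
      by (intro tendsto_mult tendsto_const vpow_lim D.powr_tendsto0)
    then show ?thesis using False by simp
  qed
  have "(G \<longlongrightarrow> (1 / (2 * pi * q powr (1/d))) * v0 powr (1/d) - (\<Sum>\<kappa>\<in>tw_supp f. if \<kappa> = k0 then f k0 * v0 powr k0 else 0)) at_top"
    unfolding G_def[abs_def]
    by (rule tendsto_diff[OF tendsto_mult[OF tendsto_const vpow_lim] tendsto_sum[OF lim_term]])
  also have "(\<Sum>\<kappa>\<in>tw_supp f. if \<kappa> = k0 then f k0 * v0 powr k0 else 0) = a0 * v0 powr k0"
    using finK k0K by (simp add: a0_def)
  finally show ?thesis by (simp add: A00_def)
qed

lemma A00_pos: "A00 > 0"
proof -
  have p: "a0 * k0 > 0" using a0pos k0pos by simp
  define X where "X = cc / (a0 * k0)"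
  have Xp: "X > 0" using p ccpos by (simp add: X_def)
  have "v0 powr b0 = X powr ((1 / b0) * b0)" unfolding v0_def X_def[symmetric] by (rule powr_powr)
  also have "(1 / b0) * b0 = 1" using b0pos by simp
  finally have vb: "v0 powr b0 = X" using Xp by simp
  have "v0 powr k0 = v0 powr (1/d + b0)" by (simp add: b0_def)
  also have "\<dots> = v0 powr (1/d) * v0 powr b0" by (rule powr_add)
  finally have vk: "v0 powr k0 = v0 powr (1/d) * X" using vb by simp
  define C where "C = 1 / (2 * pi * q powr (1/d))"
  have cq: "q powr (-1/d) = 1 / q powr (1/d)" by (simp add: powr_minus divide_inverse)
  have "a0 * X = cc / k0" using a0pos k0pos by (simp add: X_def field_simps)
  also have "cc / k0 = C * (1 / (d * k0))" using cq by (simp add: cc_def C_def field_simps)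
  finally have aX: "a0 * X = C * (1 / (d * k0))" .
  have "A00 = C * v0 powr (1/d) - v0 powr (1/d) * (a0 * X)"
    by (simp add: A00_def C_def vk algebra_simps)
  also have "\<dots> = C * v0 powr (1/d) * (1 - 1 / (d * k0))" unfolding aX by (simp add: algebra_simps)
  finally have eq: "A00 = C * v0 powr (1/d) * (1 - 1 / (d * k0))" .
  have "1 < d * k0" using big dpos by (simp add: k0_def field_simps)
  then have "1 / (d * k0) < 1" by simp
  moreover have "C > 0" using qpos by (simp add: C_def)
  ultimately show ?thesis unfolding eq using v0pos by simp
qed

end


context twd begin

lemma TT_xi: "\<xi> > 0 \<Longrightarrow> TT \<xi> powr (- e) = \<xi>"
  using epos by (simp add: TT_def powr_powr)

lemma xi_pow: "\<xi> > 0 \<Longrightarrow> \<xi> powr (a / e) = TT \<xi> powr (- a)"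
  using epos by (simp add: TT_def powr_powr)

lemma xi_pow': "\<xi> > 0 \<Longrightarrow> \<xi> powr (- (a / e)) = TT \<xi> powr a"
  using xi_pow[of \<xi> "-a"] by simp

lemma Phi_x0: assumes xi: "\<xi> > 0" and uR: "R0 \<le> uu \<xi>"
  shows "Phif d q f (uu \<xi> * \<xi> / q) \<xi> / (2 * pi) = TT \<xi> powr (- k0) * G \<xi>"
proof -
  define u where "u = uu \<xi>"
  define T where "T = TT \<xi>"
  define w where "w = v \<xi>"
  have up: "u > 0" using uR R0(1) by (simp add: u_def)
  have Tp: "T > 0" using TT_pos[OF xi] by (simp add: T_def)
  have wp: "w > 0" using up Tp by (simp add: w_def v_def u_def T_def)
  have uw: "u = w / T" using Tp by (simp add: w_def v_def u_def T_def)
  have xiT: "\<xi> = T powr (- e)" using TT_xi[OF xi] by (simp add: T_def)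
  have qx: "q * (u * \<xi> / q) / \<xi> = u" using qpos xi by simp
  have x0: "u * \<xi> / q = (w / q) * T powr (- (d * k0))"
  proof -
    have "u * \<xi> / q = (w / q) * (T powr (- e) / T)" unfolding uw xiT by simp
    also have "T powr (- e) / T = T powr (- e) * T powr (-1)" using Tp by (simp add: powr_minus divide_inverse)
    also have "\<dots> = T powr (- e + -1)" by (rule powr_add[symmetric])
    also have "- e + -1 = - (d * k0)" by (simp add: e_def)
    finally show ?thesis .
  qed
  have x0d: "(u * \<xi> / q) powr (1/d) = (w / q) powr (1/d) * T powr (- k0)"
  proof -
    have "(u * \<xi> / q) powr (1/d) = (w / q) powr (1/d) * (T powr (- (d * k0))) powr (1/d)"
      unfolding x0 using wp qpos Tp by (intro powr_mult)
    also have "(T powr (- (d * k0))) powr (1/d) = T powr (- (d * k0) * (1/d))" by (rule powr_powr)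
    also have "- (d * k0) * (1/d) = - k0" using dpos by simp
    finally show ?thesis .
  qed
  have wq: "(w / q) powr (1/d) = w powr (1/d) / q powr (1/d)" using wp qpos by (simp add: powr_divide)
  have tm: "u powr \<kappa> = T powr (- k0) * (T powr (k0 - \<kappa>) * w powr \<kappa>)" for \<kappa>
  proof -
    have "u powr \<kappa> = w powr \<kappa> / T powr \<kappa>" unfolding uw using wp Tp by (simp add: powr_divide)
    also have "1 / T powr \<kappa> = T powr (- k0) * T powr (k0 - \<kappa>)"
    proof -
      have "T powr (- k0) * T powr (k0 - \<kappa>) = T powr (- k0 + (k0 - \<kappa>))" by (rule powr_add[symmetric])
      also have "- k0 + (k0 - \<kappa>) = - \<kappa>" by simp
      also have "T powr (- \<kappa>) = 1 / T powr \<kappa>" unfolding powr_minus by (simp add: divide_inverse)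
      finally show ?thesis by simp
    qed
    then have "w powr \<kappa> / T powr \<kappa> = w powr \<kappa> * (T powr (- k0) * T powr (k0 - \<kappa>))"
      by (metis times_divide_eq_right mult_1_right)
    finally show ?thesis by (simp add: algebra_simps)
  qed
  have tw_eq: "tw_eval f u = T powr (- k0) * (\<Sum>\<kappa>\<in>tw_supp f. f \<kappa> * (T powr (k0 - \<kappa>) * w powr \<kappa>))"
    unfolding tw_eval_def sum_distrib_left tm by (intro sum.cong refl) (simp add: algebra_simps)
  have "Phif d q f (u * \<xi> / q) \<xi> / (2 * pi) =
      ((w / q) powr (1/d) * T powr (- k0) - 2 * pi * (T powr (- k0) * (\<Sum>\<kappa>\<in>tw_supp f. f \<kappa> * (T powr (k0 - \<kappa>) * w powr \<kappa>)))) / (2 * pi)"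
    unfolding Phif_def qx x0d tw_eq ..
  also have "\<dots> = T powr (- k0) * G \<xi>"
    unfolding G_def T_def[symmetric] w_def[symmetric] wq by (simp add: field_simps)
  finally show ?thesis by (simp add: u_def T_def)
qed

lemma crit_exists: "\<exists>A. crit_expansion d q f A"
proof -
  obtain A where AD: "\<forall>\<omega>. \<omega> \<notin> Dset f \<longrightarrow> A \<omega> = 0"
    and AE: "\<forall>W. (\<lambda>x. G x - (\<Sum>\<omega>\<in>{\<omega>\<in>Dset f. \<omega> \<le> W}. A \<omega> * TT x powr \<omega>)) \<in> o(\<lambda>x. TT x powr W)"
    using D.dextract[OF Exp_G] by blast
  have A0: "A 0 = A00" using D.extract_A0[OF spec[OF AE, of 0] G_lim] .
  define x0 where "x0 \<xi> = uu \<xi> * \<xi> / q" for \<xi>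
  have ev1: "\<forall>\<^sub>F \<xi> in at_top. 0 < x0 \<xi> \<and> R0 \<le> q * x0 \<xi> / \<xi> \<and>
               ((\<lambda>z. Phif d q f z \<xi>) has_real_derivative 0) (at (x0 \<xi>)) \<and>
               (\<forall>z>0. R0 \<le> q * z / \<xi> \<and> ((\<lambda>z. Phif d q f z \<xi>) has_real_derivative 0) (at z)
                      \<longrightarrow> z = x0 \<xi>)"
    using ev_uu
  proof eventually_elim
    case (elim \<xi>)
    have xi: "\<xi> > 0" and uR: "R0 \<le> uu \<xi>" and pu: "psi (uu \<xi>) = rho \<xi>"
      and un: "\<And>u. R0 \<le> u \<Longrightarrow> psi u = rho \<xi> \<Longrightarrow> u = uu \<xi>" using elim by blast+
    have up: "uu \<xi> > 0" using uR R0(1) by simp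
    have qx: "q * x0 \<xi> / \<xi> = uu \<xi>" using qpos xi by (simp add: x0_def)
    have x0p: "0 < x0 \<xi>" using up xi qpos by (simp add: x0_def)
    have d0: "((\<lambda>z. Phif d q f z \<xi>) has_real_derivative 0) (at (x0 \<xi>))"
      using crit_iff[OF x0p xi] qx pu by simp
    have uq: "z = x0 \<xi>" if z: "z > 0" "R0 \<le> q * z / \<xi>" "((\<lambda>z. Phif d q f z \<xi>) has_real_derivative 0) (at z)" for z
    proof -
      have "psi (q * z / \<xi>) = rho \<xi>" using crit_iff[OF z(1) xi] z(3) by simp
      then have "q * z / \<xi> = uu \<xi>" using un z(2) by blast
      then show ?thesis using qpos xi by (simp add: x0_def field_simps)
    qed
    have all: "\<forall>z>0. R0 \<le> q * z / \<xi> \<and> ((\<lambda>z. Phif d q f z \<xi>) has_real_derivative 0) (at z) \<longrightarrow> z = x0 \<xi>"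
      using uq by blast
    have r: "R0 \<le> q * x0 \<xi> / \<xi>" using qx uR by simp
    show ?case using x0p r d0 all by blast
  qed
  have ex: "(\<lambda>\<xi>. Phif d q f (x0 \<xi>) \<xi> / (2 * pi) - \<xi> powr (k0 / e) *
        (\<Sum>\<omega>\<in>{\<omega>\<in>Dset f. \<omega> \<le> W}. A \<omega> * \<xi> powr (- \<omega> / e))) \<in> o(\<lambda>\<xi>. \<xi> powr ((k0 - W) / e))" for W
  proof -
    define S where "S x = (\<Sum>\<omega>\<in>{\<omega>\<in>Dset f. \<omega> \<le> W}. A \<omega> * TT x powr \<omega>)" for x
    have L: "(\<lambda>x. (G x - S x) * TT x powr (- k0)) \<in> o(\<lambda>x. TT x powr W * TT x powr (- k0))"
      using spec[OF AE, of W] unfolding S_def by (rule landau_o.small.mult_right)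
    have evA: "eventually (\<lambda>x. (G x - S x) * TT x powr (- k0) = Phif d q f (x0 x) x / (2 * pi) - x powr (k0 / e) *
        (\<Sum>\<omega>\<in>{\<omega>\<in>Dset f. \<omega> \<le> W}. A \<omega> * x powr (- \<omega> / e))) at_top"
      using ev_uu
    proof eventually_elim
      case (elim x)
      have xi: "x > 0" and uR: "R0 \<le> uu x" using elim by blast+
      have s: "(\<Sum>\<omega>\<in>{\<omega>\<in>Dset f. \<omega> \<le> W}. A \<omega> * x powr (- \<omega> / e)) = S x"
        unfolding S_def by (intro sum.cong refl) (simp add: xi_pow'[OF xi])
      show ?case unfolding x0_def Phi_x0[OF xi uR] s xi_pow[OF xi] by (simp add: algebra_simps S_def)
    qed
    have evB: "eventually (\<lambda>x. TT x powr W * TT x powr (- k0) = x powr ((k0 - W) / e)) at_top"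
      using eventually_gt_at_top[of 0]
    proof eventually_elim
      case (elim x)
      have "TT x powr W * TT x powr (- k0) = TT x powr (W + - k0)" by (rule powr_add[symmetric])
      also have "\<dots> = TT x powr (- (k0 - W))" by simp
      also have "\<dots> = x powr ((k0 - W) / e)" by (rule xi_pow[OF elim, symmetric])
      finally show ?case .
    qed
    show ?thesis using L by (simp only: landau_o.small.in_cong[OF evA] landau_o.small.cong[OF evB])
  qed
  have A0n: "A 0 \<noteq> 0" using A0 A00_pos by simp
  have "crit_expansion d q f A"
    unfolding crit_expansion_alt k0_def[symmetric] e_def[symmetric]
  proof (intro conjI)
    show "\<forall>\<omega>. \<omega> \<notin> Dset f \<longrightarrow> A \<omega> = 0" by (rule AD)
    show "A 0 \<noteq> 0" by (rule A0n)
    show "\<exists>R x0. (\<forall>\<^sub>F \<xi> in at_top. 0 < x0 \<xi> \<and> R \<le> q * x0 \<xi> / \<xi> \<and>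
               ((\<lambda>z. Phif d q f z \<xi>) has_real_derivative 0) (at (x0 \<xi>)) \<and>
               (\<forall>z>0. R \<le> q * z / \<xi> \<and> ((\<lambda>z. Phif d q f z \<xi>) has_real_derivative 0) (at z)
                      \<longrightarrow> z = x0 \<xi>)) \<and>
     (\<forall>W. (\<lambda>\<xi>. Phif d q f (x0 \<xi>) \<xi> / (2 * pi)
          - \<xi> powr (k0 / e) * (\<Sum>\<omega>\<in>{\<omega>\<in>Dset f. \<omega> \<le> W}. A \<omega> * \<xi> powr (- \<omega> / e)))
        \<in> o(\<lambda>\<xi>. \<xi> powr ((k0 - W) / e)))"
      by (intro exI[of _ R0] exI[of _ x0] conjI ev1 allI ex)
  qed
  then show ?thesis by blast
qed

end


lemma supp_neg: "tw_supp (\<lambda>\<kappa>. - f \<kappa>) = tw_supp f" by (simp add: tw_supp_def)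
lemma lexp_neg: "lexp (\<lambda>\<kappa>. - f \<kappa>) = lexp f" by (simp add: lexp_def supp_neg)
lemma twist_neg: "is_twist (\<lambda>\<kappa>. - f \<kappa>) = is_twist f" by (simp add: is_twist_def supp_neg)
lemma Dset_neg: "Dset (\<lambda>\<kappa>. - f \<kappa>) = Dset f" by (simp add: Dset_def supp_neg lexp_neg)

lemma crit_exists_g:
  assumes "d > 0" "q > 0" "is_twist f" "lexp f > 1/d" "f (lexp f) > 0"
  shows "\<exists>A. crit_expansion d q f A"
proof -
  interpret twd d q f using assms by unfold_locales
  show ?thesis by (rule crit_exists)
qed

definition sgnf :: "(real \<Rightarrow> real) \<Rightarrow> (real \<Rightarrow> real)" where
  "sgnf f = (if 0 < f (lexp f) then f else (\<lambda>\<kappa>. - f \<kappa>))"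

lemma sgnf_props:
  assumes "is_twist f"
  shows "is_twist (sgnf f)" "lexp (sgnf f) = lexp f" "sgnf f (lexp (sgnf f)) > 0" "Dset (sgnf f) = Dset f"
proof -
  have "lexp f \<in> tw_supp f" by (rule lexp_in[OF assms])
  then have nz: "f (lexp f) \<noteq> 0" by (simp add: tw_supp_def)
  show "is_twist (sgnf f)" "lexp (sgnf f) = lexp f" "Dset (sgnf f) = Dset f"
    using assms by (simp_all add: sgnf_def twist_neg lexp_neg Dset_neg)
  show "sgnf f (lexp (sgnf f)) > 0" using nz by (auto simp: sgnf_def lexp_neg)
qed

lemma Tflat_defined_ok:
  assumes d: "d > 0" and q: "q > 0" and tw: "is_twist f" and big: "lexp f > 1/d"
  shows "Tflat_defined d q f"
proof -
  note g = sgnf_props[OF tw]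
  have big': "lexp (sgnf f) > 1/d" using big g(2) by simp
  obtain A where A: "crit_expansion d q (sgnf f) A" using crit_exists_g[OF d q g(1) big' g(3)] by blast
  have e: "d * lexp (sgnf f) - 1 > 0" using big' d by (simp add: field_simps)
  have "\<exists>!A. crit_expansion d q (sgnf f) A"
    using A crit_unique[OF g(1) e] by blast
  then show ?thesis unfolding Tflat_defined_def using tw big by (simp add: sgnf_def)
qed

lemma Tflat_supp:
  assumes d: "d > 0" and q: "q > 0" and tw: "is_twist f" and big: "lexp f > 1/d"
  shows "finite (tw_supp (Tflat d q f)) \<and> (\<forall>\<epsilon>\<in>tw_supp (Tflat d q f). 0 \<le> \<epsilon> \<and> \<epsilon> \<le> lexp f / (d * lexp f - 1))"
proof -
  note g = sgnf_props[OF tw]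
  define e where "e = d * lexp f - 1"
  have epos: "e > 0" using big d by (simp add: e_def field_simps)
  have ex1: "\<exists>!A. crit_expansion d q (sgnf f) A"
    using Tflat_defined_ok[OF d q tw big] unfolding Tflat_defined_def by (simp add: sgnf_def)
  define A where "A = (THE A. crit_expansion d q (sgnf f) A)"
  have cA: "crit_expansion d q (sgnf f) A" unfolding A_def by (rule theI'[OF ex1])
  have AD: "\<And>\<omega>. \<omega> \<notin> Dset f \<Longrightarrow> A \<omega> = 0" using cA g(4) unfolding crit_expansion_alt by auto
  have TP: "Tflat_pos d q (sgnf f) \<epsilon> = (if 0 \<le> \<epsilon> then A (lexp f - \<epsilon> * e) else 0)" for \<epsilon>
    unfolding Tflat_pos_def Let_def A_def e_def g(2) by simp
  have supp: "tw_supp (Tflat d q f) = tw_supp (Tflat_pos d q (sgnf f))"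
    unfolding tw_supp_def Tflat_def sgnf_def by auto
  have sub: "tw_supp (Tflat d q f) \<subseteq> (\<lambda>\<omega>. (lexp f - \<omega>) / e) ` {\<omega>\<in>Dset f. \<omega> \<le> lexp f}"
  proof
    fix \<epsilon> assume "\<epsilon> \<in> tw_supp (Tflat d q f)"
    then have "\<epsilon> \<in> tw_supp (Tflat_pos d q (sgnf f))" using supp by simp
    then have nz: "Tflat_pos d q (sgnf f) \<epsilon> \<noteq> 0" by (simp add: tw_supp_def)
    then have ep: "0 \<le> \<epsilon>" and An: "A (lexp f - \<epsilon> * e) \<noteq> 0" unfolding TP by (auto split: if_splits)
    have inD: "lexp f - \<epsilon> * e \<in> Dset f" using An AD by blast
    have "lexp f - \<epsilon> * e \<le> lexp f" using ep epos by simp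
    moreover have "\<epsilon> = (lexp f - (lexp f - \<epsilon> * e)) / e" using epos by simp
    ultimately show "\<epsilon> \<in> (\<lambda>\<omega>. (lexp f - \<omega>) / e) ` {\<omega>\<in>Dset f. \<omega> \<le> lexp f}"
      using inD by blast
  qed
  have fin: "finite (tw_supp (Tflat d q f))"
    by (rule finite_subset[OF sub finite_imageI[OF Dset_fin[OF tw]]])
  have "0 \<le> \<epsilon> \<and> \<epsilon> \<le> lexp f / e" if eps: "\<epsilon> \<in> tw_supp (Tflat d q f)" for \<epsilon>
  proof -
    obtain \<omega> where w: "\<omega> \<in> Dset f" "\<omega> \<le> lexp f" "\<epsilon> = (lexp f - \<omega>) / e" using sub eps by blast
    have "0 \<le> \<omega>" by (rule Dset_nn[OF tw w(1)])
    then show ?thesis using w epos by (simp add: divide_right_mono)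
  qed
  with fin show ?thesis by (simp add: e_def)
qed

lemma shift_lexp:
  assumes fin: "finite (tw_supp c)" and nn: "\<forall>\<kappa>\<in>tw_supp c. 0 \<le> \<kappa> \<and> \<kappa> < real (degree P)"
    and deg: "degree P \<ge> 1"
  shows "is_twist (shift P c) \<and> lexp (shift P c) = real (degree P)"
proof -
  define m where "m = degree P"
  have sub: "tw_supp (shift P c) \<subseteq> tw_supp c \<union> real ` {..m}"
  proof
    fix \<kappa> assume k: "\<kappa> \<in> tw_supp (shift P c)"
    show "\<kappa> \<in> tw_supp c \<union> real ` {..m}"
    proof (cases "c \<kappa> = 0")
      case False then show ?thesis by (simp add: tw_supp_def)
    next
      case True
      with k have "\<kappa> \<in> \<nat>" and cf: "coeff P (nat \<lfloor>\<kappa>\<rfloor>) \<noteq> 0"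
        by (auto simp: tw_supp_def shift_def split: if_splits)
      then obtain n where n: "\<kappa> = real n" by (auto elim: Nats_cases)
      then have "coeff P n \<noteq> 0" using cf by simp
      then have "n \<le> m" unfolding m_def by (rule le_degree)
      then show ?thesis using n by auto
    qed
  qed
  have finS: "finite (tw_supp (shift P c))" by (rule finite_subset[OF sub]) (use fin in auto)
  have le: "\<kappa> \<le> real m" and ge: "0 \<le> \<kappa>" if "\<kappa> \<in> tw_supp (shift P c)" for \<kappa>
    using sub that nn by (fastforce simp: m_def)+
  have mS: "real m \<in> tw_supp (shift P c)"
  proof -
    have "real m \<notin> tw_supp c" using nn by (auto simp: m_def)
    then have "c (real m) = 0" by (simp add: tw_supp_def)
    moreover have "P \<noteq> 0" using deg by auto
    then have "coeff P m \<noteq> 0" by (simp add: m_def)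
    ultimately show ?thesis by (simp add: tw_supp_def shift_def)
  qed
  have tw: "is_twist (shift P c)" unfolding is_twist_def using finS mS ge by auto
  have "lexp (shift P c) = real m"
    unfolding lexp_def by (rule Max_eqI[OF finS le mS])
  with tw show ?thesis by (simp add: m_def)
qed



lemma sel_q_pos:
  assumes "ext_selberg a F Q r lam mu w" "sel_degree r lam > 0"
  shows "sel_q Q r lam > 0"
proof -
  have Q: "Q > 0" and lam: "\<forall>j<r. lam j > 0" using assms(1) unfolding ext_selberg_def by auto
  have "(\<Prod>j<r. lam j powr (2 * lam j)) > 0" using lam by (intro prod_pos) auto
  then have c: "sel_conductor Q r lam > 0" using Q by (simp add: sel_conductor_def)
  have "(2 * pi * sel_degree r lam) powr (- sel_degree r lam) > 0" using assms(2) by simp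
  then show ?thesis using c by (simp add: sel_q_def)
qed

theorem fact1:
  fixes a :: "nat \<Rightarrow> complex" and F :: "complex \<Rightarrow> complex" and Q :: real and r :: nat
    and lam :: "nat \<Rightarrow> real" and mu :: "nat \<Rightarrow> complex" and w :: complex
    and f0 :: "real \<Rightarrow> real" and P :: "nat \<Rightarrow> int poly" and k :: nat
  assumes "ext_selberg a F Q r lam mu w"
    and "sel_degree r lam > 2"
    and "is_twist f0" and "0 \<le> lexp f0" and "lexp f0 \<le> 1 / sel_degree r lam"
    and "\<forall>j\<in>{1..k}. degree (P j) \<ge> 1"
  shows "(\<forall>j\<in>{1..<k}. Tflat_defined (sel_degree r lam) (sel_q Q r lam)
                         (twchain (sel_degree r lam) (sel_q Q r lam) f0 P j))
       \<and> (\<forall>j\<in>{1..k}. is_twist (twchain (sel_degree r lam) (sel_q Q r lam) f0 P j)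
                    \<and> lexp (twchain (sel_degree r lam) (sel_q Q r lam) f0 P j) = real (degree (P j)))
       \<and> (\<forall>j\<in>{1..k}. lexp (twchain (sel_degree r lam) (sel_q Q r lam) f0 P j) > 1 / sel_degree r lam)"
proof -
  define dd where "dd = sel_degree r lam"
  define qq where "qq = sel_q Q r lam"
  have dd2: "dd > 2" using assms(2) by (simp add: dd_def)
  have ddp: "dd > 0" using dd2 by simp
  have qqp: "qq > 0" using sel_q_pos[OF assms(1)] ddp by (simp add: qq_def dd_def)
  have degP: "\<And>j. 1 \<le> j \<Longrightarrow> j \<le> k \<Longrightarrow> degree (P j) \<ge> 1" using assms(6) by auto
  have inv: "1 / dd < 1" using dd2 by simp
  have main: "1 \<le> j \<longrightarrow> j \<le> k \<longrightarrow> is_twist (twchain dd qq f0 P j) \<and> lexp (twchain dd qq f0 P j) = real (degree (P j))"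
    for j
  proof (induction j)
    case 0
    then show ?case by simp
  next
    case (Suc j)
    show ?case
    proof (intro impI)
      assume j1: "1 \<le> Suc j" and jk: "Suc j \<le> k"
      have dP: "degree (P (Suc j)) \<ge> 1" using degP[OF j1 jk] .
      show "is_twist (twchain dd qq f0 P (Suc j)) \<and> lexp (twchain dd qq f0 P (Suc j)) = real (degree (P (Suc j)))"
      proof (cases "j = 0")
        case True
        have fin: "finite (tw_supp f0)" using assms(3) by (simp add: is_twist_def)
        have "\<forall>\<kappa>\<in>tw_supp f0. 0 \<le> \<kappa> \<and> \<kappa> < real (degree (P 1))"
        proof
          fix \<kappa> assume k: "\<kappa> \<in> tw_supp f0"
          have "\<kappa> \<le> lexp f0" by (rule lexp_ge[OF assms(3) k])
          also have "\<dots> \<le> 1 / dd" using assms(5) by (simp add: dd_def)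
          also have "\<dots> < 1" by (rule inv)
          also have "1 \<le> real (degree (P 1))" using dP True by simp
          finally show "0 \<le> \<kappa> \<and> \<kappa> < real (degree (P 1))" using supp_nn[OF assms(3) k] by simp
        qed
        from shift_lexp[OF fin this] dP True show ?thesis by simp
      next
        case False
        then have j1': "1 \<le> j" and jk': "j \<le> k" using jk by auto
        define g where "g = twchain dd qq f0 P j"
        have gtw: "is_twist g" and gl: "lexp g = real (degree (P j))"
          using Suc.IH j1' jk' by (simp_all add: g_def)
        define m where "m = real (degree (P j))"
        have m1: "m \<ge> 1" using degP[OF j1' jk'] by (simp add: m_def)
        have gbig: "lexp g > 1 / dd" using gl m1 inv by (simp add: m_def)
        have TS: "finite (tw_supp (Tflat dd qq g)) \<and> (\<forall>\<epsilon>\<in>tw_supp (Tflat dd qq g). 0 \<le> \<epsilon> \<and> \<epsilon> \<le> lexp g / (dd * lexp g - 1))"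
          by (rule Tflat_supp[OF ddp qqp gtw gbig])
        have lt: "m / (dd * m - 1) < 1"
        proof -
          have "m * (dd - 1) \<ge> 1 * (dd - 1)" using m1 dd2 by (intro mult_right_mono) auto
          then have "dd * m - 1 > m" using dd2 by (simp add: algebra_simps)
          moreover have "dd * m - 1 > 0" using m1 dd2 by (smt (verit) mult_le_cancel_left1)
          ultimately show ?thesis by simp
        qed
        have "\<forall>\<epsilon>\<in>tw_supp (Tflat dd qq g). 0 \<le> \<epsilon> \<and> \<epsilon> < real (degree (P (Suc j)))"
        proof
          fix \<epsilon> assume "\<epsilon> \<in> tw_supp (Tflat dd qq g)"
          then have "0 \<le> \<epsilon>" "\<epsilon> \<le> m / (dd * m - 1)" using TS gl by (auto simp: m_def)
          moreover have "1 \<le> real (degree (P (Suc j)))" using dP by simp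
          ultimately show "0 \<le> \<epsilon> \<and> \<epsilon> < real (degree (P (Suc j)))" using lt by linarith
        qed
        from shift_lexp[OF conjunct1[OF TS] this dP] False show ?thesis by (simp add: g_def)
      qed
    qed
  qed
  have A2: "\<forall>j\<in>{1..k}. is_twist (twchain dd qq f0 P j) \<and> lexp (twchain dd qq f0 P j) = real (degree (P j))"
    using main by auto
  have A3: "\<forall>j\<in>{1..k}. lexp (twchain dd qq f0 P j) > 1 / dd"
  proof
    fix j assume j: "j \<in> {1..k}"
    then have "lexp (twchain dd qq f0 P j) = real (degree (P j))" "degree (P j) \<ge> 1"
      using A2 degP by auto
    then show "lexp (twchain dd qq f0 P j) > 1 / dd" using inv by simp
  qed
  have A1: "\<forall>j\<in>{1..<k}. Tflat_defined dd qq (twchain dd qq f0 P j)"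
  proof
    fix j assume j: "j \<in> {1..<k}"
    then have "j \<in> {1..k}" by simp
    then show "Tflat_defined dd qq (twchain dd qq f0 P j)"
      using Tflat_defined_ok[OF ddp qqp] A2 A3 by blast
  qed
  show ?thesis using A1 A2 A3 by (simp add: dd_def qq_def)
qed


end
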